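(* Let $p$ be a prime with $p\equiv 19\pmod{24}$ and $G=PGL_2(p)$. Let $k>10$ be a divisor of $p-1$ with $(p-1)/k$ odd. Let $\mathbb{T}_k$ be the set of triples $(a_1,b_1,c_1)\in G^3$ with $a_1b_1c_1=1$ and $a_1,b_1,c_1$ of orders $2,3,k$ respectively. For a conjugacy class $\mathcal{C}$ of elements of order $k$ in $G$, let $\mathbb{T}_k(\mathcal{C})=\{(a_1,b_1,c_1)\in\mathbb{T}_k: c_1\in\mathcal{C}\}$. Then for each conjugacy class $\mathcal{C}$ of elements of order $k$ in $G$, $|\mathbb{T}_k(\mathcal{C})|=p(p^2-1)$.
   Context: $PGL_2(p)=GL_2(\mathbb{F}_p)/\{\lambda I:\lambda\in\mathbb{F}_p^*\}$. *)

theory Defs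
  imports "HOL-Computational_Algebra.Primes" "HOL-Algebra.Multiplicative_Group"
begin

text \<open>2x2 matrices over F_p, represented as quadruples (a,b,c,d) of integers in {0..<p},
  standing for the matrix [[a,b],[c,d]].\<close>
type_synonym mat2 = "int \<times> int \<times> int \<times> int"

definition mmul :: "nat \<Rightarrow> mat2 \<Rightarrow> mat2 \<Rightarrow> mat2" where
  "mmul p M N = (case M of (a,b,c,d) \<Rightarrow> case N of (e,f,g,h) \<Rightarrow>
     ((a*e+b*g) mod int p, (a*f+b*h) mod int p, (c*e+d*g) mod int p, (c*f+d*h) mod int p))"

definition msmul :: "nat \<Rightarrow> int \<Rightarrow> mat2 \<Rightarrow> mat2" where
  "msmul p l M = (case M of (a,b,c,d) \<Rightarrow>
     ((l*a) mod int p, (l*b) mod int p, (l*c) mod int p, (l*d) mod int p))"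

definition GL2 :: "nat \<Rightarrow> mat2 set" where
  "GL2 p = {(a,b,c,d). a \<in> {0..<int p} \<and> b \<in> {0..<int p} \<and> c \<in> {0..<int p} \<and> d \<in> {0..<int p}
             \<and> (a*d - b*c) mod int p \<noteq> 0}"

definition sclass :: "nat \<Rightarrow> mat2 \<Rightarrow> mat2 set" where
  "sclass p M = {msmul p l M | l. l \<in> {1..<int p}}"

text \<open>PGL_2(p) = GL_2(F_p)/{scalars}; elements are scalar classes, product of classes
  is the set of all products (which is again a class).\<close>
definition PGL2 :: "nat \<Rightarrow> mat2 set monoid" where
  "PGL2 p = \<lparr> carrier = sclass p ` GL2 p,
              mult = (\<lambda>X Y. {mmul p A B | A B. A \<in> X \<and> B \<in> Y}),
              one = sclass p (1,0,0,1) \<rparr>"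

definition conj_class :: "('a, 'b) monoid_scheme \<Rightarrow> 'a \<Rightarrow> 'a set" where
  "conj_class G x = {g \<otimes>\<^bsub>G\<^esub> x \<otimes>\<^bsub>G\<^esub> inv\<^bsub>G\<^esub> g | g. g \<in> carrier G}"

definition triples :: "('a, 'b) monoid_scheme \<Rightarrow> nat \<Rightarrow> ('a \<times> 'a \<times> 'a) set" where
  "triples G k = {(a,b,c). a \<in> carrier G \<and> b \<in> carrier G \<and> c \<in> carrier G
      \<and> a \<otimes>\<^bsub>G\<^esub> b \<otimes>\<^bsub>G\<^esub> c = \<one>\<^bsub>G\<^esub>
      \<and> group.ord G a = 2 \<and> group.ord G b = 3 \<and> group.ord G c = k}"

end

theory Submission
  imports Defs "HOL-Number_Theory.Number_Theory" "HOL-Algebra.Group_Action"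
begin


fun imul :: "mat2 \<Rightarrow> mat2 \<Rightarrow> mat2" where
 "imul (a,b,c,d) (e,f,g,h) = (a*e+b*g, a*f+b*h, c*e+d*g, c*f+d*h)"
fun mred :: "nat \<Rightarrow> mat2 \<Rightarrow> mat2" where
 "mred p (a,b,c,d) = (a mod int p, b mod int p, c mod int p, d mod int p)"
fun ismul :: "int \<Rightarrow> mat2 \<Rightarrow> mat2" where "ismul l (a,b,c,d) = (l*a,l*b,l*c,l*d)"
fun iadd :: "mat2 \<Rightarrow> mat2 \<Rightarrow> mat2" where "iadd (a,b,c,d) (e,f,g,h) = (a+e,b+f,c+g,d+h)"
fun mdet :: "mat2 \<Rightarrow> int" where "mdet (a,b,c,d) = a*d-b*c"
fun mtr :: "mat2 \<Rightarrow> int" where "mtr (a,b,c,d) = a+d"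
fun scal :: "nat \<Rightarrow> mat2 \<Rightarrow> bool" where
  "scal p (a,b,c,d) = (int p dvd b \<and> int p dvd c \<and> int p dvd (a-d))"
fun adj :: "mat2 \<Rightarrow> mat2" where "adj (a,b,c,d) = (d,-b,-c,a)"
abbreviation mI :: mat2 where "mI \<equiv> (1,0,0,1)"
fun ipow :: "mat2 \<Rightarrow> nat \<Rightarrow> mat2" where
  "ipow M 0 = mI" | "ipow M (Suc n) = imul (ipow M n) M"

lemma mmul_eq: "mmul p M N = mred p (imul M N)"
  by (cases M rule: prod_cases4; cases N rule: prod_cases4) (simp add: mmul_def)

lemma msmul_eq: "msmul p l M = mred p (ismul l M)"
  by (cases M rule: prod_cases4) (simp add: msmul_def)

lemma mod_comb: "((a::int) mod m * (e mod m) + b mod m * (g mod m)) mod m = (a*e+b*g) mod m"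
  by (metis mod_add_eq mod_mult_eq)

lemma mred_imul: "mred p (imul (mred p M) (mred p N)) = mred p (imul M N)"
  by (cases M rule: prod_cases4; cases N rule: prod_cases4) (simp only: mred.simps imul.simps mod_comb)

lemma mod_comb1: "((a::int) mod m * e + b mod m * g) mod m = (a*e+b*g) mod m"
  by (metis mod_add_eq mod_mult_left_eq)
lemma mod_comb2: "((a::int) * (e mod m) + b * (g mod m)) mod m = (a*e+b*g) mod m"
  by (metis mod_add_eq mod_mult_right_eq)

lemma mred_imul1: "mred p (imul (mred p M) N) = mred p (imul M N)"
  by (cases M rule: prod_cases4; cases N rule: prod_cases4) (simp only: mred.simps imul.simps mod_comb1)

lemma mred_imul2: "mred p (imul M (mred p N)) = mred p (imul M N)"
  by (cases M rule: prod_cases4; cases N rule: prod_cases4) (simp only: mred.simps imul.simps mod_comb2)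

lemma mred_ismul: "mred p (ismul l (mred p M)) = mred p (ismul l M)"
  by (cases M rule: prod_cases4) (simp add: mod_mult_right_eq)

lemma mred_ismul2: "mred p (ismul (l mod int p) M) = mred p (ismul l M)"
  by (cases M rule: prod_cases4) (simp add: mod_mult_left_eq)

lemma mred_mred[simp]: "mred p (mred p M) = mred p M"
  by (cases M rule: prod_cases4) simp

lemma imul_assoc: "imul (imul A B) C = imul A (imul B C)"
  by (cases A rule: prod_cases4; cases B rule: prod_cases4; cases C rule: prod_cases4) (simp add: algebra_simps)

lemma imul_ismul1: "imul (ismul l A) B = ismul l (imul A B)"
  by (cases A rule: prod_cases4; cases B rule: prod_cases4) (simp add: algebra_simps)
lemma imul_ismul2: "imul A (ismul l B) = ismul l (imul A B)"
  by (cases A rule: prod_cases4; cases B rule: prod_cases4) (simp add: algebra_simps)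
lemma ismul_ismul: "ismul l (ismul m A) = ismul (l*m) A"
  by (cases A rule: prod_cases4) (simp add: algebra_simps)
lemma ismul_1[simp]: "ismul 1 A = A"
  by (cases A rule: prod_cases4) simp
lemma imul_I[simp]: "imul mI A = A" "imul A mI = A"
  by (cases A rule: prod_cases4, simp)+
lemma mdet_imul: "mdet (imul A B) = mdet A * mdet B"
  by (cases A rule: prod_cases4; cases B rule: prod_cases4) (simp add: algebra_simps)
lemma mdet_ismul: "mdet (ismul l A) = l^2 * mdet A"
  by (cases A rule: prod_cases4) (simp add: algebra_simps power2_eq_square)
lemma adj_imul: "imul (adj A) A = ismul (mdet A) mI"
  by (cases A rule: prod_cases4) (simp add: algebra_simps)
lemma mdet_mred_dvd: "int p dvd mdet (mred p M) \<longleftrightarrow> int p dvd mdet M"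
proof (cases M rule: prod_cases4)
  case (fields a b c d)
  have e: "((a::int) mod m * (d mod m) - b mod m * (c mod m)) mod m = (a*d-b*c) mod m" for a b c d m
    by (metis mod_diff_eq mod_mult_eq)
  have "mdet (mred p M) mod int p = mdet M mod int p"
    using fields by (simp only: mred.simps mdet.simps e)
  then show ?thesis by (metis dvd_eq_mod_eq_0)
qed



locale prm = fixes p :: nat assumes p_prime: "prime p" and p_gt3: "p > 3"
begin
lemma p_gt2: "p > 2" using p_gt3 by simp

lemma pint_prime: "prime (int p)" using p_prime by simp

lemma unit_inv: assumes "\<not> int p dvd l" shows "\<exists>l'. int p dvd (l*l' - 1)"
proof -
  have "coprime l (int p)" using assms pint_prime
    by (metis coprime_commute prime_imp_coprime)
  then obtain x where "[l*x = 1] (mod int p)" using cong_solve_coprime_int by blast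
  then show ?thesis by (metis cong_iff_dvd_diff)
qed

lemma unit_mod: assumes "\<not> int p dvd l" shows "l mod int p \<in> {1..<int p}"
proof -
  have "l mod int p \<noteq> 0" using assms by (simp add: dvd_eq_mod_eq_0)
  moreover have "l mod int p \<ge> 0" "l mod int p < int p" using p_gt2 by auto
  ultimately show ?thesis by auto
qed

lemma unit_range: "l \<in> {1..<int p} \<Longrightarrow> \<not> int p dvd l"
  by (auto simp: zdvd_not_zless)

lemma prime_mult: "int p dvd a * b \<longleftrightarrow> int p dvd a \<or> int p dvd b"
  using pint_prime by (simp add: prime_dvd_mult_iff)

lemma pdvd1: "\<not> int p dvd 1" using p_gt2 by auto

lemma sclass_alt: "sclass p M = {mred p (ismul l M) | l. \<not> int p dvd l}"
proof -
  have "{mred p (ismul l M) | l. \<not> int p dvd l} \<subseteq> sclass p M"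
  proof
    fix X assume "X \<in> {mred p (ismul l M) | l. \<not> int p dvd l}"
    then obtain l where l: "\<not> int p dvd l" "X = mred p (ismul l M)" by auto
    then have "X = msmul p (l mod int p) M" by (simp add: msmul_eq mred_ismul2)
    then show "X \<in> sclass p M" using unit_mod[OF l(1)] unfolding sclass_def by blast
  qed
  moreover have "sclass p M \<subseteq> {mred p (ismul l M) | l. \<not> int p dvd l}"
    unfolding sclass_def msmul_eq using unit_range by blast
  ultimately show ?thesis by blast
qed

lemma sclass_ismul: assumes "\<not> int p dvd s" shows "sclass p (ismul s M) = sclass p M"
proof -
  obtain s' where s': "int p dvd (s*s' - 1)" using unit_inv[OF assms] by blast
  have "\<not> int p dvd s'"
  proof
    assume "int p dvd s'"
    then have "int p dvd s*s'" by simp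
    with s' have "int p dvd (s*s' - (s*s'-1))" using dvd_diff by blast
    then show False using pdvd1 by simp
  qed
  show ?thesis unfolding sclass_alt
  proof (intro equalityI subsetI)
    fix X assume "X \<in> {mred p (ismul l (ismul s M)) | l. \<not> int p dvd l}"
    then obtain l where "\<not> int p dvd l" "X = mred p (ismul l (ismul s M))" by auto
    then show "X \<in> {mred p (ismul l M) | l. \<not> int p dvd l}"
      using assms by (auto simp: ismul_ismul prime_mult)
  next
    fix X assume "X \<in> {mred p (ismul l M) | l. \<not> int p dvd l}"
    then obtain l where l: "\<not> int p dvd l" "X = mred p (ismul l M)" by auto
    have "(l*s'*s) mod int p = l mod int p"
    proof -
      have "l*s'*s - l = l*(s*s'-1)" by (simp add: algebra_simps)
      then have "int p dvd (l*s'*s - l)" using s' by simp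
      then show ?thesis by (simp add: mod_eq_dvd_iff)
    qed
    then have "X = mred p (ismul (l*s') (ismul s M))"
      using l by (metis ismul_ismul mred_ismul2)
    moreover have "\<not> int p dvd (l*s')" using l \<open>\<not> int p dvd s'\<close> by (simp add: prime_mult)
    ultimately show "X \<in> {mred p (ismul l (ismul s M)) | l. \<not> int p dvd l}" by blast
  qed
qed

lemma sclass_mred: "sclass p (mred p M) = sclass p M"
  unfolding sclass_alt by (simp add: mred_ismul)

lemma mred_in_sclass: "mred p M \<in> sclass p M"
proof -
  have "mred p M = mred p (ismul 1 M)" by simp
  then show ?thesis unfolding sclass_alt using pdvd1 by blast
qed

lemma PGL2_mult: "sclass p A \<otimes>\<^bsub>PGL2 p\<^esub> sclass p B = sclass p (imul A B)"
proof -
  have "sclass p A \<otimes>\<^bsub>PGL2 p\<^esub> sclass p B = {mmul p X Y | X Y. X \<in> sclass p A \<and> Y \<in> sclass p B}"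
    by (simp add: PGL2_def)
  also have "\<dots> = sclass p (imul A B)"
  proof (intro equalityI subsetI)
    fix Z assume "Z \<in> {mmul p X Y | X Y. X \<in> sclass p A \<and> Y \<in> sclass p B}"
    then obtain X Y where XY: "Z = mmul p X Y" "X \<in> sclass p A" "Y \<in> sclass p B" by blast
    obtain l where l: "\<not> int p dvd l" "X = mred p (ismul l A)" using XY(2) unfolding sclass_alt by blast
    obtain m where m: "\<not> int p dvd m" "Y = mred p (ismul m B)" using XY(3) unfolding sclass_alt by blast
    have "Z = mred p (ismul (l*m) (imul A B))"
      using XY(1) l m by (simp add: mmul_eq mred_imul imul_ismul1 imul_ismul2 ismul_ismul mult.commute)
    moreover have "\<not> int p dvd (l*m)" using l m by (simp add: prime_mult)
    ultimately show "Z \<in> sclass p (imul A B)" unfolding sclass_alt by blast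
  next
    fix Z assume "Z \<in> sclass p (imul A B)"
    then obtain l where l: "\<not> int p dvd l" "Z = mred p (ismul l (imul A B))" unfolding sclass_alt by blast
    have "Z = mmul p (mred p (ismul l A)) (mred p B)"
      using l by (simp add: mmul_eq mred_imul imul_ismul1)
    moreover have "mred p (ismul l A) \<in> sclass p A" using l unfolding sclass_alt by blast
    moreover have "mred p B \<in> sclass p B" by (rule mred_in_sclass)
    ultimately show "Z \<in> {mmul p X Y | X Y. X \<in> sclass p A \<and> Y \<in> sclass p B}" by blast
  qed
  finally show ?thesis .
qed

lemma GL2_iff: "M \<in> GL2 p \<longleftrightarrow> mred p M = M \<and> \<not> int p dvd mdet M"
proof (cases M rule: prod_cases4)
  case (fields a b c d)
  have pp: "int p > 0" using p_gt2 by simp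
  have r: "(0 \<le> x \<and> x < int p) \<longleftrightarrow> x mod int p = x" for x
  proof
    assume "0 \<le> x \<and> x < int p" then show "x mod int p = x" by (simp add: mod_pos_pos_trivial)
  next
    assume h: "x mod int p = x"
    have "x mod int p \<ge> 0" "x mod int p < int p" using pp by simp_all
    then show "0 \<le> x \<and> x < int p" using h by simp
  qed
  have "M \<in> GL2 p \<longleftrightarrow> (0 \<le> a \<and> a < int p) \<and> (0 \<le> b \<and> b < int p) \<and> (0 \<le> c \<and> c < int p)
      \<and> (0 \<le> d \<and> d < int p) \<and> \<not> int p dvd mdet M"
    using fields unfolding GL2_def by (auto simp: dvd_eq_mod_eq_0)
  also have "\<dots> \<longleftrightarrow> mred p M = M \<and> \<not> int p dvd mdet M"
    unfolding r using fields by auto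
  finally show ?thesis .
qed

lemma GL2_mred: "\<not> int p dvd mdet M \<Longrightarrow> mred p M \<in> GL2 p"
  by (simp add: GL2_iff mdet_mred_dvd)

lemma carrier_PGL2: "carrier (PGL2 p) = sclass p ` GL2 p" by (simp add: PGL2_def)
lemma one_PGL2: "\<one>\<^bsub>PGL2 p\<^esub> = sclass p mI" by (simp add: PGL2_def)

lemma carrier_elem: "x \<in> carrier (PGL2 p) \<Longrightarrow> \<exists>A. x = sclass p A \<and> \<not> int p dvd mdet A"
  unfolding carrier_PGL2 using GL2_iff by blast

lemma sclass_scalar: "\<not> int p dvd s \<Longrightarrow> sclass p (s,0,0,s) = sclass p mI"
  using sclass_ismul[of s mI] by simp

lemma sclass_in_carrier: "\<not> int p dvd mdet A \<Longrightarrow> sclass p A \<in> carrier (PGL2 p)"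
  using GL2_mred sclass_mred carrier_PGL2 by (metis image_eqI)


lemma group_PGL2: "group (PGL2 p)"
proof (rule groupI)
  fix x y assume "x \<in> carrier (PGL2 p)" "y \<in> carrier (PGL2 p)"
  then obtain A B where "x = sclass p A" "\<not> int p dvd mdet A" "y = sclass p B" "\<not> int p dvd mdet B"
    using carrier_elem by metis
  then show "x \<otimes>\<^bsub>PGL2 p\<^esub> y \<in> carrier (PGL2 p)"
    by (simp add: PGL2_mult sclass_in_carrier mdet_imul prime_mult)
next
  show "\<one>\<^bsub>PGL2 p\<^esub> \<in> carrier (PGL2 p)" using one_PGL2 sclass_in_carrier pdvd1 by simp
next
  fix x y z assume "x \<in> carrier (PGL2 p)" "y \<in> carrier (PGL2 p)" "z \<in> carrier (PGL2 p)"
  then obtain A B C where "x = sclass p A" "y = sclass p B" "z = sclass p C"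
    using carrier_elem by metis
  then show "x \<otimes>\<^bsub>PGL2 p\<^esub> y \<otimes>\<^bsub>PGL2 p\<^esub> z = x \<otimes>\<^bsub>PGL2 p\<^esub> (y \<otimes>\<^bsub>PGL2 p\<^esub> z)"
    by (simp add: PGL2_mult imul_assoc)
next
  fix x assume "x \<in> carrier (PGL2 p)"
  then obtain A where "x = sclass p A" using carrier_elem by metis
  then show "\<one>\<^bsub>PGL2 p\<^esub> \<otimes>\<^bsub>PGL2 p\<^esub> x = x" by (simp add: one_PGL2 PGL2_mult)
next
  fix x assume "x \<in> carrier (PGL2 p)"
  then obtain A where A: "x = sclass p A" "\<not> int p dvd mdet A" using carrier_elem by metis
  have "sclass p (adj A) \<in> carrier (PGL2 p)"
    using A(2) by (intro sclass_in_carrier) (cases A rule: prod_cases4, simp add: mult.commute)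
  moreover have "sclass p (adj A) \<otimes>\<^bsub>PGL2 p\<^esub> x = \<one>\<^bsub>PGL2 p\<^esub>"
    using A by (simp add: PGL2_mult adj_imul sclass_scalar one_PGL2)
  ultimately show "\<exists>y\<in>carrier (PGL2 p). y \<otimes>\<^bsub>PGL2 p\<^esub> x = \<one>\<^bsub>PGL2 p\<^esub>" by blast
qed

end


fun lu :: "int \<Rightarrow> int \<Rightarrow> nat \<Rightarrow> int" where
  "lu t d 0 = 0" | "lu t d (Suc 0) = 1" | "lu t d (Suc (Suc n)) = t * lu t d (Suc n) - d * lu t d n"

lemma ipow_lu: "ipow (a,b,c,e) (Suc n) =
   (lu (a+e) (a*e-b*c) (Suc n) * a - (a*e-b*c) * lu (a+e) (a*e-b*c) n,
    lu (a+e) (a*e-b*c) (Suc n) * b, lu (a+e) (a*e-b*c) (Suc n) * c,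
    lu (a+e) (a*e-b*c) (Suc n) * e - (a*e-b*c) * lu (a+e) (a*e-b*c) n)"
proof (induction n)
  case 0
  then show ?case by simp
next
  case (Suc n)
  show ?case
    by (subst ipow.simps(2), subst Suc, simp add: algebra_simps)
qed

lemma mdet_ipow: "mdet (ipow A n) = mdet A ^ n"
  by (induction n) (simp_all add: mdet_imul)

context prm begin

lemma pow_PGL2: "sclass p A [^]\<^bsub>PGL2 p\<^esub> (n::nat) = sclass p (ipow A n)"
  by (induction n) (simp_all add: one_PGL2 PGL2_mult)

lemma sclass_one_iff: assumes "\<not> int p dvd mdet A" shows "sclass p A = \<one>\<^bsub>PGL2 p\<^esub> \<longleftrightarrow> scal p A"
proof (cases A rule: prod_cases4)
  case (fields a b c d)
  show ?thesis
  proof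
    assume h: "sclass p A = \<one>\<^bsub>PGL2 p\<^esub>"
    have "mred p A \<in> sclass p mI" using mred_in_sclass[of A] h by (simp add: one_PGL2)
    then obtain l where "mred p A = mred p (ismul l mI)" unfolding sclass_alt by blast
    then have "a mod int p = d mod int p" "b mod int p = 0" "c mod int p = 0"
      using fields by simp_all
    then show "scal p A" using fields by (simp add: mod_eq_dvd_iff dvd_eq_mod_eq_0)
  next
    assume h: "scal p A"
    then have d: "int p dvd b" "int p dvd c" "int p dvd (a - d)" using fields by simp_all
    have "\<not> int p dvd a"
    proof
      assume "int p dvd a"
      then have "int p dvd a*d - b*c" using d by simp
      then show False using assms fields by simp
    qed
    have "d mod int p = a mod int p" using d(3) by (simp add: mod_eq_dvd_iff dvd_diff_commute)
    then have "mred p A = mred p (a,0,0,a)" using fields d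
      by (simp add: dvd_eq_mod_eq_0)
    then have "sclass p A = sclass p (a,0,0,a)" by (metis sclass_mred)
    also have "\<dots> = sclass p mI" using sclass_scalar \<open>\<not> int p dvd a\<close> by blast
    finally show "sclass p A = \<one>\<^bsub>PGL2 p\<^esub>" by (simp add: one_PGL2)
  qed
qed

lemma nonscal_dvd: assumes "\<not> scal p (a,b,c,e)"
  shows "int p dvd u*b \<and> int p dvd u*c \<and> int p dvd u*(a-e) \<longleftrightarrow> int p dvd u"
  using assms by (auto simp: prime_mult)

lemma pow_one_iff: assumes "\<not> int p dvd mdet A" "\<not> scal p A"
  shows "sclass p A [^]\<^bsub>PGL2 p\<^esub> n = \<one>\<^bsub>PGL2 p\<^esub> \<longleftrightarrow> int p dvd lu (mtr A) (mdet A) n"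
proof (cases n)
  case 0
  then show ?thesis by simp
next
  case (Suc m)
  obtain a b c e where A: "A = (a,b,c,e)" by (cases A rule: prod_cases4)
  have "\<not> int p dvd mdet (ipow A n)"
  proof
    assume "int p dvd mdet (ipow A n)"
    then have "int p dvd mdet A ^ n" by (simp only: mdet_ipow)
    then have "int p dvd mdet A" using prime_dvd_power pint_prime by blast
    then show False using assms(1) by blast
  qed
  then have "sclass p A [^]\<^bsub>PGL2 p\<^esub> n = \<one>\<^bsub>PGL2 p\<^esub> \<longleftrightarrow> scal p (ipow A n)"
    by (simp add: pow_PGL2 sclass_one_iff)
  also have "\<dots> \<longleftrightarrow> int p dvd lu (mtr A) (mdet A) n"
  proof -
    let ?u = "lu (a+e) (a*e-b*c) (Suc m)"
    have "scal p (ipow A n) \<longleftrightarrow> int p dvd ?u*b \<and> int p dvd ?u*c \<and> int p dvd ?u*(a-e)"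
      using A Suc by (simp del: ipow.simps add: ipow_lu algebra_simps)
    also have "\<dots> \<longleftrightarrow> int p dvd ?u" using nonscal_dvd assms(2) A by blast
    finally show ?thesis using A Suc by simp
  qed
  finally show ?thesis .
qed

end

lemma (in group) ord_prime_iff: assumes "x \<in> carrier G" "prime (q::nat)"
  shows "ord x = q \<longleftrightarrow> x [^] q = \<one> \<and> x \<noteq> \<one>"
proof
  assume "ord x = q" then show "x [^] q = \<one> \<and> x \<noteq> \<one>"
    using assms pow_eq_id ord_eq_1 by (metis dvd_refl not_prime_1)
next
  assume h: "x [^] q = \<one> \<and> x \<noteq> \<one>"
  then have "ord x dvd q" using assms pow_eq_id by blast
  then have "ord x = 1 \<or> ord x = q" using assms(2) by (simp add: prime_nat_iff)
  then show "ord x = q" using h ord_eq_1 assms(1) by blast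
qed

context prm begin

lemma grp: "group (PGL2 p)" by (rule group_PGL2)

lemma ord2_iff: assumes "\<not> int p dvd mdet A"
  shows "group.ord (PGL2 p) (sclass p A) = 2 \<longleftrightarrow> int p dvd mtr A"
proof (cases "scal p A")
  case True
  then have "sclass p A = \<one>\<^bsub>PGL2 p\<^esub>" using sclass_one_iff assms by blast
  then have "group.ord (PGL2 p) (sclass p A) = 1" using group.ord_id[OF grp] by simp
  moreover have "\<not> int p dvd mtr A"
  proof (cases A rule: prod_cases4)
    case (fields a b c d)
    show ?thesis
    proof
      assume "int p dvd mtr A"
      then have h1: "int p dvd (a+d)" using fields by simp
      have h2: "int p dvd (a-d)" using True fields by simp
      have "int p dvd (a+d) + (a-d)" using h1 h2 by (rule dvd_add)
      moreover have "(a+d) + (a-d) = 2*a" by simp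
      ultimately have "int p dvd 2*a" by metis
      then have "int p dvd a" using p_gt2 prime_mult by (auto simp: zdvd_not_zless)
      then have "int p dvd a*d - b*c" using True fields by simp
      then show False using assms fields by simp
    qed
  qed
  ultimately show ?thesis by simp
next
  case False
  have c: "sclass p A \<in> carrier (PGL2 p)" using sclass_in_carrier assms by blast
  have "sclass p A \<noteq> \<one>\<^bsub>PGL2 p\<^esub>" using False sclass_one_iff assms by blast
  moreover have "lu (mtr A) (mdet A) 2 = mtr A" by (simp add: numeral_2_eq_2)
  moreover note group.ord_prime_iff[OF grp c two_is_prime_nat] pow_one_iff[OF assms False, of 2]
  ultimately show ?thesis by simp
qed

lemma ord3_iff: assumes "\<not> int p dvd mdet A"
  shows "group.ord (PGL2 p) (sclass p A) = 3 \<longleftrightarrow> int p dvd (mtr A^2 - mdet A)"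
proof (cases "scal p A")
  case True
  then have "sclass p A = \<one>\<^bsub>PGL2 p\<^esub>" using sclass_one_iff assms by blast
  then have "group.ord (PGL2 p) (sclass p A) = 1" using group.ord_id[OF grp] by simp
  moreover have "\<not> int p dvd (mtr A^2 - mdet A)"
  proof (cases A rule: prod_cases4)
    case (fields a b c d)
    show ?thesis
    proof
      assume h: "int p dvd (mtr A^2 - mdet A)"
      obtain x where x: "a - d = int p * x" using True fields by auto
      obtain y where y: "b = int p * y" using True fields by auto
      have "mtr A^2 - mdet A = 3*a^2 + int p * ((x^2*int p - 3*x*a) + y*c)"
        using fields x y by (simp add: algebra_simps power2_eq_square)
      then have "int p dvd 3*a^2" using h by (metis dvd_add_left_iff dvd_triv_left)
      moreover have "\<not> int p dvd 3" using p_gt3 by (auto simp: zdvd_not_zless)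
      ultimately have "int p dvd a" using prime_mult by (simp add: power2_eq_square)
      then have "int p dvd a*d - b*c" using True fields by simp
      then show False using assms fields by simp
    qed
  qed
  ultimately show ?thesis by simp
next
  case False
  have c: "sclass p A \<in> carrier (PGL2 p)" using sclass_in_carrier assms by blast
  have "sclass p A \<noteq> \<one>\<^bsub>PGL2 p\<^esub>" using False sclass_one_iff assms by blast
  moreover have "lu (mtr A) (mdet A) 3 = mtr A^2 - mdet A"
    by (simp add: numeral_3_eq_3 power2_eq_square)
  moreover note group.ord_prime_iff[OF grp c, of 3] pow_one_iff[OF assms False, of 3]
  ultimately show ?thesis by simp
qed

end


fun ab :: "int \<Rightarrow> int \<Rightarrow> nat \<Rightarrow> int \<times> int" where
  "ab t \<delta> 0 = (1,0)" |
  "ab t \<delta> (Suc n) = (t * fst (ab t \<delta> n) + \<delta> * snd (ab t \<delta> n), fst (ab t \<delta> n) + t * snd (ab t \<delta> n))"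

definition vv :: "int \<Rightarrow> int \<Rightarrow> nat \<Rightarrow> int" where
  "vv t d n = (if n = 0 then 1 else - d * lu t d (n-1))"

lemma lu_Suc: "lu t d (Suc n) = t * lu t d n + vv t d n"
  by (cases n) (simp_all add: vv_def)

lemma ab_rel: assumes "m dvd (\<delta> - (t^2 - 4*d))"
  shows "m dvd (2 * snd (ab t \<delta> n) - 2^n * lu t d n) \<and>
         m dvd (fst (ab t \<delta> n) - 2^n * vv t d n - t * snd (ab t \<delta> n))"
proof (induction n)
  case 0 show ?case by (simp add: vv_def)
next
  case (Suc n)
  define a where "a = fst (ab t \<delta> n)"
  define b where "b = snd (ab t \<delta> n)"
  define u where "u = lu t d n"
  define v where "v = vv t d n"
  define X where "X = a - 2^n * v - t * b"
  define Y where "Y = 2 * b - 2^n * u"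
  have hX: "m dvd X" "m dvd Y" using Suc unfolding X_def Y_def a_def b_def u_def v_def by auto
  have e1: "2 * snd (ab t \<delta> (Suc n)) - 2^(Suc n) * lu t d (Suc n) = 2*X + 2*t*Y"
    unfolding X_def Y_def by (simp add: lu_Suc a_def b_def u_def v_def algebra_simps)
  have e2: "fst (ab t \<delta> (Suc n)) - 2^(Suc n) * vv t d (Suc n) - t * snd (ab t \<delta> (Suc n))
      = (\<delta> - (t^2 - 4*d)) * b - 2*d*Y"
    unfolding Y_def by (simp add: vv_def a_def b_def u_def algebra_simps power2_eq_square)
  have "m dvd 2*X + 2*t*Y" using hX by simp
  moreover have "m dvd (\<delta> - (t^2 - 4*d)) * b - 2*d*Y" using hX assms by simp
  ultimately show ?case using e1 e2 by simp
qed

definition PP :: "int \<Rightarrow> int \<Rightarrow> nat \<Rightarrow> int" where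
  "PP t \<delta> n = (\<Sum>j\<le>n. if even j then int (n choose j) * t^(n-j) * \<delta>^(j div 2) else 0)"
definition QQ :: "int \<Rightarrow> int \<Rightarrow> nat \<Rightarrow> int" where
  "QQ t \<delta> n = (\<Sum>j\<le>n. if even j then 0 else int (n choose j) * t^(n-j) * \<delta>^(j div 2))"

lemma cx_step: "((A::complex) + B*r)*(T + r) = (A*T + B*(r*r)) + (A + B*T)*r"
  by (simp add: algebra_simps)

lemma ab_cx: fixes r :: complex assumes "r^2 = of_int \<delta>"
  shows "(of_int t + r)^n = of_int (fst (ab t \<delta> n)) + of_int (snd (ab t \<delta> n)) * r"
proof (induction n)
  case 0 show ?case by simp
next
  case (Suc n)
  have rr: "r*r = of_int \<delta>" using assms by (simp add: power2_eq_square)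
  have "(of_int t + r)^Suc n = (of_int (fst (ab t \<delta> n)) + of_int (snd (ab t \<delta> n)) * r) * (of_int t + r)"
    using Suc by (simp add: mult.commute)
  also have "\<dots> = of_int (fst (ab t \<delta> (Suc n))) + of_int (snd (ab t \<delta> (Suc n))) * r"
    unfolding cx_step rr by (simp add: algebra_simps)
  finally show ?case .
qed

lemma rpow: fixes r :: complex assumes "r^2 = of_int \<delta>"
  shows "r^k = of_int (\<delta>^(k div 2)) * (if even k then 1 else r)"
proof -
  have "r^k = r^(2*(k div 2) + k mod 2)" by simp
  also have "\<dots> = (r^2)^(k div 2) * r^(k mod 2)" by (simp only: power_add power_mult)
  finally show ?thesis using assms by (cases "even k") (auto simp: odd_iff_mod_2_eq_one)
qed

lemma binom_cx: fixes r :: complex assumes "r^2 = of_int \<delta>"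
  shows "(of_int t + r)^n = of_int (PP t \<delta> n) + of_int (QQ t \<delta> n) * r"
proof -
  have "(of_int t + r)^n = (r + of_int t)^n" by (simp add: add.commute)
  also have "\<dots> = (\<Sum>k\<le>n. of_nat (n choose k) * r^k * (of_int t)^(n-k))" by (rule binomial_ring)
  also have "\<dots> = (\<Sum>k\<le>n. of_int (if even k then int (n choose k) * t^(n-k) * \<delta>^(k div 2) else 0)
       + of_int (if even k then 0 else int (n choose k) * t^(n-k) * \<delta>^(k div 2)) * r)"
    by (rule sum.cong) (auto simp: rpow[OF assms] algebra_simps)
  also have "\<dots> = of_int (PP t \<delta> n) + of_int (QQ t \<delta> n) * r"
    unfolding PP_def QQ_def by (simp add: sum.distrib sum_distrib_right)
  finally show ?thesis .
qed

lemma ab_closed: assumes "\<delta> \<noteq> 0"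
  shows "fst (ab t \<delta> n) = PP t \<delta> n \<and> snd (ab t \<delta> n) = QQ t \<delta> n"
proof -
  define r where "r = csqrt (of_int \<delta>)"
  have r2: "r^2 = of_int \<delta>" "(-r)^2 = of_int \<delta>" unfolding r_def by simp_all
  have r0: "r \<noteq> 0" using assms unfolding r_def by auto
  let ?A = "of_int (fst (ab t \<delta> n)) :: complex" and ?B = "of_int (snd (ab t \<delta> n)) :: complex"
  let ?P = "of_int (PP t \<delta> n) :: complex" and ?Q = "of_int (QQ t \<delta> n) :: complex"
  have e1: "?A + ?B * r = ?P + ?Q * r" using ab_cx[OF r2(1)] binom_cx[OF r2(1)] by metis
  have e2: "?A + ?B * (-r) = ?P + ?Q * (-r)" using ab_cx[OF r2(2)] binom_cx[OF r2(2)] by metis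
  have "2 * ?A = (?A + ?B * r) + (?A + ?B * (-r))" by simp
  also have "\<dots> = (?P + ?Q * r) + (?P + ?Q * (-r))" using e1 e2 by simp
  also have "\<dots> = 2 * ?P" by simp
  finally have "2 * ?A = 2 * ?P" .
  then have "?A = ?P" by simp
  then have "?B * r = ?Q * r" using e1 by simp
  then have "?B = ?Q" using r0 by simp
  then show ?thesis using \<open>?A = ?P\<close> by simp
qed

context prm begin

lemma p_odd: "odd p" using p_prime p_gt2 prime_odd_nat by blast

lemma sum_split_p: "(\<Sum>j\<le>p. f j) = f 0 + f p + (\<Sum>j\<in>{1..<p}. f j)"
proof -
  have "{..p} = insert 0 (insert p {1..<p})" using p_gt2 by auto
  then show ?thesis using p_gt2 by (simp add: add.assoc)
qed

lemma mid_dvd: "int p dvd (\<Sum>j\<in>{1..<p}. if even j then 0 else int (p choose j) * x j * y j)"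
  "int p dvd (\<Sum>j\<in>{1..<p}. if even j then int (p choose j) * x j * y j else 0)"
proof -
  have c: "int p dvd int (p choose j)" if "j \<in> {1..<p}" for j
    using dvd_choose_prime[of j p] that p_prime by (auto simp: int_dvd_int_iff)
  show "int p dvd (\<Sum>j\<in>{1..<p}. if even j then 0 else int (p choose j) * x j * y j)"
    by (rule dvd_sum) (use c in auto)
  show "int p dvd (\<Sum>j\<in>{1..<p}. if even j then int (p choose j) * x j * y j else 0)"
    by (rule dvd_sum) (use c in auto)
qed

lemma PP_p: "int p dvd (PP t \<delta> p - t^p)"
proof -
  have "PP t \<delta> p = t^p + (\<Sum>j\<in>{1..<p}. if even j then int (p choose j) * t^(p-j) * \<delta>^(j div 2) else 0)"
    unfolding PP_def sum_split_p using p_odd by simp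
  then show ?thesis using mid_dvd(2) by simp
qed

lemma QQ_p: "int p dvd (QQ t \<delta> p - \<delta>^((p-1) div 2))"
proof -
  have pd: "p div 2 = (p - 1) div 2" using p_odd by (auto elim!: oddE)
  have "QQ t \<delta> p = \<delta>^((p-1) div 2) + (\<Sum>j\<in>{1..<p}. if even j then 0 else int (p choose j) * t^(p-j) * \<delta>^(j div 2))"
    unfolding QQ_def sum_split_p using p_odd pd by simp
  then show ?thesis using mid_dvd(1) by simp
qed

lemma fermat_int: "int p dvd (t^p - t)"
proof -
  have ps: "p = Suc (p-1)" using p_gt2 by simp
  show ?thesis
proof (cases "int p dvd t")
  case True
  have ps: "p = Suc (p-1)" using p_gt2 by simp
  have "t * t^(p-1) = t^p" by (subst (2) ps) simp
  moreover have "int p dvd t * t^(p-1)" using True by simp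
  ultimately have "int p dvd t^p" by simp
  then show ?thesis using True by simp
next
  case False
  define n where "n = nat (t mod int p)"
  have nt: "int n = t mod int p" unfolding n_def using p_gt2 by simp
  have "\<not> p dvd n"
  proof
    assume "p dvd n" then have "int p dvd int n" by simp
    then have "int p dvd t mod int p" using nt by simp
    then show False using False by (simp add: dvd_mod_iff)
  qed
  then have "[n^(p-1) = 1] (mod p)" using fermat_theorem p_prime by blast
  then have "[int (n^(p-1)) = int 1] (mod int p)" using cong_int_iff by blast
  then have "[int n^(p-1) = 1] (mod int p)" by simp
  moreover have "[int n = t] (mod int p)" using nt by (simp add: cong_def)
  ultimately have "[t^(p-1) = 1] (mod int p)" using cong_pow[of "int n" t "int p" "p-1"] cong_sym cong_trans by blast
  then have "[t * t^(p-1) = t * 1] (mod int p)" by (rule cong_scalar_left)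
  moreover have "t * t^(p-1) = t^p" by (subst (2) ps) simp
  ultimately have "[t^p = t] (mod int p)" by simp
  then show ?thesis by (simp add: cong_iff_dvd_diff)
qed
qed

end


context prm begin

lemma dvd_pow2_cancel: assumes "int p dvd 2^n * x" shows "int p dvd x"
proof -
  have "\<not> int p dvd 2" using p_gt2 by (auto simp: zdvd_not_zless)
  then have "\<not> int p dvd 2^n" using prime_dvd_power pint_prime by blast
  then show ?thesis using assms prime_mult by blast
qed

lemma split_exists:
  assumes "\<not> int p dvd mdet A" "\<not> scal p A"
    and ordk: "\<forall>n. int p dvd lu (mtr A) (mdet A) n \<longleftrightarrow> k dvd n" and "k dvd p - 1" "k > 2"
  shows "\<exists>s. int p dvd (s^2 - (mtr A^2 - 4*mdet A)) \<and> \<not> int p dvd s"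
proof -
  define t where "t = mtr A"
  define d where "d = mdet A"
  define D where "D = t^2 - 4*d"
  define \<delta> where "\<delta> = D mod int p + int p"
  have pp: "int p > 0" using p_gt2 by simp
  have d0: "\<delta> \<noteq> 0" unfolding \<delta>_def using pp by (smt (verit) pos_mod_sign)
  have "\<delta> - D = int p * (1 - D div int p)"
    unfolding \<delta>_def by (simp add: algebra_simps minus_mult_div_eq_mod[symmetric])
  then have hd: "int p dvd (\<delta> - D)" by simp
  have rel: "int p dvd (2 * snd (ab t \<delta> n) - 2^n * lu t d n)" for n
    using ab_rel[of "int p" \<delta> t d n] hd unfolding D_def by blast
  have cl: "fst (ab t \<delta> n) = PP t \<delta> n" "snd (ab t \<delta> n) = QQ t \<delta> n" for n
    using ab_closed[OF d0] by auto
  have kle: "k \<le> p - 1" using assms(4) p_gt2 by (intro dvd_imp_le) auto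
  show ?thesis
  proof (cases "int p dvd D")
    case True
    then have "int p dvd \<delta>" using dvd_add[OF hd True] by simp
    moreover have "(p-1) div 2 \<noteq> 0" using p_gt2 by auto
    ultimately have h1: "int p dvd \<delta>^((p-1) div 2)" using dvd_power[of "(p-1) div 2" \<delta>] dvd_trans by blast
    have "int p dvd snd (ab t \<delta> p)" using dvd_add[OF QQ_p[of t \<delta>] h1] cl(2) by simp
    then have h2: "int p dvd 2 * snd (ab t \<delta> p)" by simp
    have "int p dvd 2^p * lu t d p" using dvd_diff[OF h2 rel[of p]] by simp
    then have "int p dvd lu t d p" by (rule dvd_pow2_cancel)
    then have "k dvd p" using ordk unfolding t_def d_def by blast
    then have "k = 1 \<or> k = p" using p_prime by (simp add: prime_nat_iff)
    then show ?thesis using kle assms(5) p_gt2 by auto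
  next
    case False
    show ?thesis
    proof (rule ccontr)
      assume ns: "\<not> ?thesis"
      have nq: "\<not> QuadRes (int p) \<delta>"
      proof
        assume "QuadRes (int p) \<delta>"
        then obtain y where "[y^2 = \<delta>] (mod int p)" unfolding QuadRes_def by blast
        then have "int p dvd y^2 - \<delta>" by (simp add: cong_iff_dvd_diff)
        then have h: "int p dvd y^2 - D" using dvd_add[OF _ hd] by fastforce
        have "\<not> int p dvd y"
        proof
          assume "int p dvd y"
          then have h3: "int p dvd y^2" by (simp add: power2_eq_square)
          show False using dvd_diff[OF h3 h] False by simp
        qed
        then show False using ns h unfolding D_def t_def d_def by blast
      qed
      have n0: "\<not> [\<delta> = 0] (mod int p)"
      proof
        assume "[\<delta> = 0] (mod int p)"
        then have h4: "int p dvd \<delta>" by (simp add: cong_0_iff)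
        show False using dvd_diff[OF h4 hd] False by simp
      qed
      have "Legendre \<delta> (int p) = -1" unfolding Legendre_def using nq n0 by simp
      then have "[-1 = \<delta>^((p-1) div 2)] (mod int p)" using euler_criterion[OF p_prime p_gt2, of \<delta>] by simp
      then have e0: "int p dvd -1 - \<delta>^((p-1) div 2)" by (simp add: cong_iff_dvd_diff)
      have "\<delta>^((p-1) div 2) + 1 = - (-1 - \<delta>^((p-1) div 2))" by simp
      then have e1: "int p dvd \<delta>^((p-1) div 2) + 1" using e0 by (simp only: dvd_minus_iff)
      have q1: "int p dvd QQ t \<delta> p + 1"
      proof -
        have "QQ t \<delta> p + 1 = (QQ t \<delta> p - \<delta>^((p-1) div 2)) + (\<delta>^((p-1) div 2) + 1)" by simp
        then show ?thesis using dvd_add[OF QQ_p[of t \<delta>] e1] by simp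
      qed
      have "snd (ab t \<delta> (Suc p)) = (PP t \<delta> p - t^p) + (t^p - t) + t * (QQ t \<delta> p + 1)"
        using cl by (simp add: algebra_simps)
      moreover have "int p dvd (PP t \<delta> p - t^p) + (t^p - t) + t * (QQ t \<delta> p + 1)"
        using dvd_add[OF dvd_add[OF PP_p[of t \<delta>] fermat_int[of t]] dvd_mult[OF q1, of t]] .
      ultimately have "int p dvd snd (ab t \<delta> (Suc p))" by simp
      then have h5: "int p dvd 2 * snd (ab t \<delta> (Suc p))" by (rule dvd_mult)
      have "int p dvd 2^(Suc p) * lu t d (Suc p)" using dvd_diff[OF h5 rel[of "Suc p"]] by simp
      then have "int p dvd lu t d (Suc p)" by (rule dvd_pow2_cancel)
      then have "k dvd Suc p" using ordk unfolding t_def d_def by blast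
      then have "k dvd Suc p - (p - 1)" using assms(4) by (simp add: dvd_diff_nat)
      moreover have "Suc p - (p - 1) = 2" using p_gt2 by simp
      ultimately have "k dvd 2" by simp
      then show False using assms(5) by (auto dest: dvd_imp_le)
    qed
  qed
qed

end


lemma mred_eqI: "m dvd (x1 - y1) \<Longrightarrow> m dvd (x2 - y2) \<Longrightarrow> m dvd (x3 - y3) \<Longrightarrow> m dvd (x4 - y4) \<Longrightarrow>
   mred p (x1,x2,x3,x4) = mred p (y1,y2,y3,y4)" if "m = int p"
  using that by (simp add: mod_eq_dvd_iff)

lemma ipow_diag: "ipow (x,0,0,y) n = (x^n,0,0,y^n)"
  by (induction n) (simp_all add: mult.commute)

lemma (in group) cancel1: "a \<in> carrier G \<Longrightarrow> g \<in> carrier G \<Longrightarrow> a \<otimes> inv g \<otimes> g = a"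
  by (simp add: m_assoc)
lemma (in group) cancel2: "a \<in> carrier G \<Longrightarrow> g \<in> carrier G \<Longrightarrow> a \<otimes> g \<otimes> inv g = a"
  by (simp add: m_assoc)

lemma (in group) conj_pow: assumes "g \<in> carrier G" "x \<in> carrier G"
  shows "(g \<otimes> x \<otimes> inv g) [^] (n::nat) = g \<otimes> x [^] n \<otimes> inv g"
proof (induction n)
  case 0 then show ?case using assms by simp
next
  case (Suc n)
  show ?case using Suc assms by (simp add: m_assoc[symmetric] cancel1)
qed

lemma (in group) conj_eq_one: assumes "g \<in> carrier G" "y \<in> carrier G"
  shows "g \<otimes> y \<otimes> inv g = \<one> \<longleftrightarrow> y = \<one>"
proof
  assume h: "g \<otimes> y \<otimes> inv g = \<one>"
  have "y = inv g \<otimes> (g \<otimes> y \<otimes> inv g) \<otimes> g" using assms by (simp add: m_assoc[symmetric] cancel1)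
  also have "\<dots> = \<one>" using h assms by simp
  finally show "y = \<one>" .
qed (use assms in simp)

lemma (in group) ord_conj: assumes "g \<in> carrier G" "x \<in> carrier G"
  shows "ord (g \<otimes> x \<otimes> inv g) = ord x"
proof -
  have c: "g \<otimes> x \<otimes> inv g \<in> carrier G" using assms by simp
  have "(g \<otimes> x \<otimes> inv g) [^] n = \<one> \<longleftrightarrow> x [^] n = \<one>" for n :: nat
    using conj_pow[OF assms, of n] conj_eq_one[OF assms(1), of "x [^] n"] assms by simp
  then show ?thesis using ord_unique[OF c] pow_eq_id[OF assms(2)] by simp
qed

context prm begin

lemma chi_dvd: assumes "int p dvd (\<sigma>^2 - (t^2 - 4*d))"
  shows "int p dvd (((int p + 1) div 2 * (t + \<sigma>))^2 - t * ((int p + 1) div 2 * (t + \<sigma>)) + d)"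
proof -
  define h where "h = (int p + 1) div 2"
  have h2: "2 * h = int p + 1" unfolding h_def using p_odd by (auto elim!: oddE)
  define l where "l = h * (t + \<sigma>)"
  define w where "w = t + \<sigma>"
  have "2 * l = (2 * h) * w" unfolding l_def w_def by simp
  then have "2 * l = (int p + 1) * w" using h2 by simp
  then have l2: "2 * l = w + int p * w" by (simp add: algebra_simps)
  have "4 * (l^2 - t*l + d) = (2*l)^2 - 2*t*(2*l) + 4*d"
    by (simp add: algebra_simps power2_eq_square)
  also have "\<dots> = (w + int p * w)^2 - 2*t*(w + int p * w) + 4*d" by (simp only: l2)
  also have "\<dots> = (\<sigma>^2 - (t^2 - 4*d)) + int p * (2*w^2 + int p * w^2 - 2*t*w)"
    unfolding w_def by (simp add: algebra_simps power2_eq_square)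
  finally have e: "2^2 * (l^2 - t*l + d) = (\<sigma>^2 - (t^2 - 4*d)) + int p * (2*w^2 + int p * w^2 - 2*t*w)" by simp
  have "int p dvd 2^2 * (l^2 - t*l + d)" unfolding e using assms by simp
  then show ?thesis using dvd_pow2_cancel unfolding l_def h_def by blast
qed

lemma diag_exists:
  assumes "\<not> int p dvd mdet A" "\<not> scal p A" "int p dvd (s^2 - (mtr A^2 - 4*mdet A))" "\<not> int p dvd s"
  shows "\<exists>P x y. \<not> int p dvd mdet P \<and> \<not> int p dvd x \<and> \<not> int p dvd y \<and> \<not> int p dvd (x - y)
     \<and> mred p (imul A P) = mred p (imul P (x,0,0,y))"
proof -
  obtain a b c e where A: "A = (a,b,c,e)" by (cases A rule: prod_cases4)
  define t where "t = a + e"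
  define d where "d = a*e - b*c"
  define h where "h = (int p + 1) div 2"
  have h2: "2 * h = int p + 1" unfolding h_def using p_odd by (auto elim!: oddE)
  define l1 where "l1 = h * (t + s)"
  define l2 where "l2 = h * (t + - s)"
  have dd: "\<not> int p dvd d" using assms(1) A d_def by simp
  have c1: "int p dvd (l1^2 - t*l1 + d)" using chi_dvd[of s t d] assms(3) A unfolding l1_def h_def t_def d_def by simp
  have c2: "int p dvd (l2^2 - t*l2 + d)" using chi_dvd[of "-s" t d] assms(3) A unfolding l2_def h_def t_def d_def by simp
  have "l1 - l2 = (2*h) * s" unfolding l1_def l2_def by (simp add: algebra_simps)
  then have "l1 - l2 = (int p + 1) * s" using h2 by simp
  then have ldiff: "l1 - l2 = s + int p * s" by (simp add: algebra_simps)
  have nl: "\<not> int p dvd (l1 - l2)"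
  proof
    assume "int p dvd (l1 - l2)"
    then have "int p dvd (l1 - l2) - int p * s" by simp
    then show False using ldiff assms(4) by simp
  qed
  have nz: "\<not> int p dvd l" if "int p dvd (l^2 - t*l + d)" for l
  proof
    assume "int p dvd l"
    then have "int p dvd l * (l - t)" by simp
    then have "int p dvd (l^2 - t*l + d) - l * (l - t)" using that by (rule dvd_diff[rotated])
    then show False using dd by (simp add: algebra_simps power2_eq_square)
  qed
  show ?thesis
  proof (cases "int p dvd b")
    case False
    define P where "P = (b, b, l1 - a, l2 - a)"
    have "mred p (imul A P) = mred p (imul P (l1,0,0,l2))"
      unfolding A P_def imul.simps
    proof (rule mred_eqI[OF refl])
      show "int p dvd (a * b + b * (l1 - a) - (b * l1 + b * 0))" by (simp add: algebra_simps)
      show "int p dvd (a * b + b * (l2 - a) - (b * 0 + b * l2))" by (simp add: algebra_simps)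
      have "c * b + e * (l1 - a) - ((l1 - a) * l1 + (l2 - a) * 0) = - (l1^2 - t*l1 + d)"
        unfolding t_def d_def by (simp add: algebra_simps power2_eq_square)
      then show "int p dvd (c * b + e * (l1 - a) - ((l1 - a) * l1 + (l2 - a) * 0))" using c1 by (simp only: dvd_minus_iff)
      have "c * b + e * (l2 - a) - ((l1 - a) * 0 + (l2 - a) * l2) = - (l2^2 - t*l2 + d)"
        unfolding t_def d_def by (simp add: algebra_simps power2_eq_square)
      then show "int p dvd (c * b + e * (l2 - a) - ((l1 - a) * 0 + (l2 - a) * l2))" using c2 by (simp only: dvd_minus_iff)
    qed
    moreover have "mdet P = - (b * (l1 - l2))" unfolding P_def by (simp add: algebra_simps)
    then have "\<not> int p dvd mdet P" using False nl by (simp add: prime_mult)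
    ultimately show ?thesis using nz c1 c2 nl by blast
  next
    case True
    show ?thesis
    proof (cases "int p dvd c")
      case False
      define P where "P = (l1 - e, l2 - e, c, c)"
      have "mred p (imul A P) = mred p (imul P (l1,0,0,l2))"
        unfolding A P_def imul.simps
      proof (rule mred_eqI[OF refl])
        have "a * (l1 - e) + b * c - ((l1 - e) * l1 + (l2 - e) * 0) = - (l1^2 - t*l1 + d)"
          unfolding t_def d_def by (simp add: algebra_simps power2_eq_square)
        then show "int p dvd (a * (l1 - e) + b * c - ((l1 - e) * l1 + (l2 - e) * 0))" using c1 by (simp only: dvd_minus_iff)
        have "a * (l2 - e) + b * c - ((l1 - e) * 0 + (l2 - e) * l2) = - (l2^2 - t*l2 + d)"
          unfolding t_def d_def by (simp add: algebra_simps power2_eq_square)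
        then show "int p dvd (a * (l2 - e) + b * c - ((l1 - e) * 0 + (l2 - e) * l2))" using c2 by (simp only: dvd_minus_iff)
        show "int p dvd (c * (l1 - e) + e * c - (c * l1 + c * 0))" by (simp add: algebra_simps)
        show "int p dvd (c * (l2 - e) + e * c - (c * 0 + c * l2))" by (simp add: algebra_simps)
      qed
      moreover have "mdet P = c * (l1 - l2)" unfolding P_def by (simp add: algebra_simps)
      then have "\<not> int p dvd mdet P" using False nl by (simp add: prime_mult)
      ultimately show ?thesis using nz c1 c2 nl by blast
    next
      case True2: True
      have ae: "\<not> int p dvd (a - e)" using assms(2) A True True2 by simp
      have bc: "int p dvd b * c" using True by simp
      have na: "\<not> int p dvd a"
      proof
        assume "int p dvd a" then have "int p dvd a * e" by simp
        then have "int p dvd a*e - b*c" using bc by (rule dvd_diff)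
        then show False using dd d_def by simp
      qed
      have ne: "\<not> int p dvd e"
      proof
        assume "int p dvd e" then have "int p dvd a * e" by simp
        then have "int p dvd a*e - b*c" using bc by (rule dvd_diff)
        then show False using dd d_def by simp
      qed
      have "mred p (imul A mI) = mred p (imul mI (a,0,0,e))"
        unfolding A imul_I by (rule mred_eqI[OF refl]) (use True True2 in simp_all)
      moreover have "\<not> int p dvd mdet mI" using pdvd1 by simp
      ultimately show ?thesis using na ne ae by blast
    qed
  qed
qed

end


context prm begin

lemma sclass_eq_iff: "sclass p M = sclass p N \<longleftrightarrow> (\<exists>l. \<not> int p dvd l \<and> mred p N = mred p (ismul l M))"
proof
  assume "sclass p M = sclass p N"
  then have "mred p N \<in> sclass p M" using mred_in_sclass by simp
  then show "\<exists>l. \<not> int p dvd l \<and> mred p N = mred p (ismul l M)" unfolding sclass_alt by blast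
next
  assume "\<exists>l. \<not> int p dvd l \<and> mred p N = mred p (ismul l M)"
  then obtain l where l: "\<not> int p dvd l" "mred p N = mred p (ismul l M)" by blast
  have "sclass p N = sclass p (mred p N)" by (simp add: sclass_mred)
  also have "\<dots> = sclass p (ismul l M)" using l(2) sclass_mred by metis
  also have "\<dots> = sclass p M" using sclass_ismul[OF l(1)] .
  finally show "sclass p M = sclass p N" by simp
qed

lemma conj_reduce:
  assumes "c \<in> carrier (PGL2 p)" "group.ord (PGL2 p) c = k" "k dvd p - 1" "k > 2"
  shows "\<exists>g\<in>carrier (PGL2 p). \<exists>\<mu>. \<not> int p dvd \<mu> \<and> \<not> int p dvd (\<mu> - 1) \<and>
           c = g \<otimes>\<^bsub>PGL2 p\<^esub> sclass p (\<mu>,0,0,1) \<otimes>\<^bsub>PGL2 p\<^esub> inv\<^bsub>PGL2 p\<^esub> g"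
proof -
  interpret G: group "PGL2 p" by (rule grp)
  obtain A where A: "c = sclass p A" "\<not> int p dvd mdet A" using carrier_elem[OF assms(1)] by blast
  have ns: "\<not> scal p A"
  proof
    assume "scal p A"
    then have "c = \<one>\<^bsub>PGL2 p\<^esub>" using A sclass_one_iff by blast
    then show False using assms G.ord_id by simp
  qed
  have ordk: "\<forall>n. int p dvd lu (mtr A) (mdet A) n \<longleftrightarrow> k dvd n"
    using pow_one_iff[OF A(2) ns] G.pow_eq_id[OF assms(1)] A(1) assms(2) by simp
  obtain s where s: "int p dvd (s^2 - (mtr A^2 - 4*mdet A))" "\<not> int p dvd s"
    using split_exists[OF A(2) ns ordk assms(3,4)] by blast
  obtain P x y where P: "\<not> int p dvd mdet P" "\<not> int p dvd x" "\<not> int p dvd y" "\<not> int p dvd (x - y)"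
     "mred p (imul A P) = mred p (imul P (x,0,0,y))"
    using diag_exists[OF A(2) ns s] by blast
  define g where "g = sclass p P"
  have g: "g \<in> carrier (PGL2 p)" unfolding g_def using P(1) sclass_in_carrier by blast
  obtain y' where y': "int p dvd (y * y' - 1)" using unit_inv[OF P(3)] by blast
  have ny': "\<not> int p dvd y'"
  proof
    assume "int p dvd y'" then have "int p dvd y * y'" by simp
    then have "int p dvd y * y' - (y * y' - 1)" using y' by (rule dvd_diff)
    then show False using pdvd1 by simp
  qed
  define \<mu> where "\<mu> = y' * x"
  have m1: "\<not> int p dvd \<mu>" unfolding \<mu>_def using ny' P(2) by (simp add: prime_mult)
  have m2: "\<not> int p dvd (\<mu> - 1)"
  proof
    assume h: "int p dvd (\<mu> - 1)"
    have "y' * (x - y) = (\<mu> - 1) - (y * y' - 1)" unfolding \<mu>_def by (simp add: algebra_simps)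
    then have "int p dvd y' * (x - y)" using dvd_diff[OF h y'] by simp
    then show False using ny' P(4) by (simp add: prime_mult)
  qed
  have D: "sclass p (x,0,0,y) = sclass p (\<mu>,0,0,1)"
  proof -
    have "sclass p (x,0,0,y) = sclass p (ismul y' (x,0,0,y))" using sclass_ismul[OF ny', of "(x,0,0,y)"] by simp
    also have "\<dots> = sclass p (mred p (y' * x, 0, 0, y' * y))" by (simp only: sclass_mred ismul.simps mult_zero_right)
    also have "mred p (y' * x, 0, 0, y' * y) = mred p (\<mu>, 0, 0, 1)"
      by (rule mred_eqI[OF refl]) (use y' in \<open>simp_all add: \<mu>_def mult.commute\<close>)
    also have "sclass p \<dots> = sclass p (\<mu>,0,0,1)" by (simp only: sclass_mred)
    finally show ?thesis .
  qed
  have Dc: "sclass p (\<mu>,0,0,1) \<in> carrier (PGL2 p)" using m1 sclass_in_carrier by simp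
  have "c \<otimes>\<^bsub>PGL2 p\<^esub> g = g \<otimes>\<^bsub>PGL2 p\<^esub> sclass p (\<mu>,0,0,1)"
  proof -
    have "c \<otimes>\<^bsub>PGL2 p\<^esub> g = sclass p (mred p (imul A P))" unfolding A g_def by (simp add: PGL2_mult sclass_mred)
    also have "\<dots> = sclass p (mred p (imul P (x,0,0,y)))" using P(5) by simp
    also have "\<dots> = g \<otimes>\<^bsub>PGL2 p\<^esub> sclass p (x,0,0,y)" unfolding g_def by (simp add: PGL2_mult sclass_mred)
    finally show ?thesis using D by simp
  qed
  then have "c = g \<otimes>\<^bsub>PGL2 p\<^esub> sclass p (\<mu>,0,0,1) \<otimes>\<^bsub>PGL2 p\<^esub> inv\<^bsub>PGL2 p\<^esub> g"
    using G.cancel2[OF assms(1) g] by simp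
  then show ?thesis using g m1 m2 by blast
qed

lemma diag_pow_iff: assumes "\<not> int p dvd \<mu>" "\<not> int p dvd (\<mu> - 1)"
  shows "sclass p (\<mu>,0,0,1) [^]\<^bsub>PGL2 p\<^esub> (n::nat) = \<one>\<^bsub>PGL2 p\<^esub> \<longleftrightarrow> int p dvd (\<mu>^n - 1)"
proof -
  have "\<not> int p dvd \<mu>^n" using assms(1) prime_dvd_power pint_prime by blast
  then have "\<not> int p dvd mdet (ipow (\<mu>,0,0,1) n)" by (simp add: ipow_diag)
  then show ?thesis by (simp add: pow_PGL2 sclass_one_iff ipow_diag)
qed

lemma diag_facts: assumes "\<not> int p dvd \<mu>" "\<not> int p dvd (\<mu> - 1)"
  "group.ord (PGL2 p) (sclass p (\<mu>,0,0,1)) = k" "k > 6"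
  shows "\<not> int p dvd (\<mu> + 1)" "\<not> int p dvd (\<mu>^2 - \<mu> + 1)"
proof -
  interpret G: group "PGL2 p" by (rule grp)
  have Dc: "sclass p (\<mu>,0,0,1) \<in> carrier (PGL2 p)" using assms(1) sclass_in_carrier by simp
  have o: "int p dvd (\<mu>^n - 1) \<longleftrightarrow> k dvd n" for n
    using diag_pow_iff[OF assms(1,2), of n] G.pow_eq_id[OF Dc, of n] assms(3) by simp
  show "\<not> int p dvd (\<mu> + 1)"
  proof
    assume "int p dvd (\<mu> + 1)"
    then have "int p dvd (\<mu> + 1) * (\<mu> - 1)" by simp
    moreover have "(\<mu> + 1) * (\<mu> - 1) = \<mu>^2 - 1" by (simp add: algebra_simps power2_eq_square)
    ultimately have "k dvd 2" using o by simp
    then show False using assms(4) by (auto dest: dvd_imp_le)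
  qed
  show "\<not> int p dvd (\<mu>^2 - \<mu> + 1)"
  proof
    assume "int p dvd (\<mu>^2 - \<mu> + 1)"
    then have "int p dvd (\<mu>^2 - \<mu> + 1) * ((\<mu> + 1) * (\<mu>^3 - 1))" by simp
    moreover have "(\<mu>^2 - \<mu> + 1) * ((\<mu> + 1) * (\<mu>^3 - 1)) = \<mu>^6 - 1"
      by (simp add: algebra_simps power2_eq_square power3_eq_cube numeral_eq_Suc)
    ultimately have "k dvd 6" using o by simp
    then show False using assms(4) by (auto dest: dvd_imp_le)
  qed
qed

end


context prm begin

definition ip :: "int \<Rightarrow> int" where "ip y = y^(p-2)"

lemma ip_inv: assumes "\<not> int p dvd y" shows "int p dvd (y * ip y - 1)"
proof -
  have e1: "p = Suc (p - 1)" using p_gt2 by simp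
  have e2: "p - 1 = Suc (p - 2)" using p_gt2 by simp
  have "y^p - y = y * (y * ip y - 1)" unfolding ip_def
    by (subst e1, subst e2) (simp add: algebra_simps)
  then have "int p dvd y * (y * ip y - 1)" using fermat_int[of y] by simp
  then show ?thesis using assms prime_mult by blast
qed

lemma mod_dvd_diff: "int p dvd (u mod int p - u)"
proof -
  have "u mod int p - u = - (int p * (u div int p))" by (simp add: minus_mult_div_eq_mod[symmetric])
  then show ?thesis by simp
qed

lemma R_mod: "x \<in> {0..<int p} \<Longrightarrow> x mod int p = x" by (simp add: mod_pos_pos_trivial)

lemma R_dvd: assumes "x \<in> {0..<int p}" shows "int p dvd x \<longleftrightarrow> x = 0"
proof
  assume h: "int p dvd x"
  show "x = 0"
  proof (rule ccontr)
    assume "x \<noteq> 0" then have "x > 0" using assms by simp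
    then have "int p \<le> x" using h zdvd_imp_le by blast
    then show False using assms by simp
  qed
qed simp

lemma R_eq: "x \<in> {0..<int p} \<Longrightarrow> y \<in> {0..<int p} \<Longrightarrow> int p dvd (x - y) \<Longrightarrow> x = y"
  using R_mod[of x] R_mod[of y] mod_eq_dvd_iff[of x "int p" y] by simp

lemma mod_R: "u mod int p \<in> {0..<int p}" using p_gt2 by simp

lemma finite_GL2: "finite (GL2 p)"
proof -
  have "GL2 p \<subseteq> {0..<int p} \<times> {0..<int p} \<times> {0..<int p} \<times> {0..<int p}" unfolding GL2_def by auto
  then show ?thesis by (rule finite_subset) simp
qed

lemma finite_carrier: "finite (carrier (PGL2 p))"
  unfolding carrier_PGL2 using finite_GL2 by simp

lemma card_sclass: assumes "X \<in> GL2 p" shows "card (sclass p X) = p - 1"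
proof -
  obtain a b c d where X: "X = (a,b,c,d)" by (cases X rule: prod_cases4)
  have ex: "\<exists>e\<in>{a,b,c,d}. \<not> int p dvd e"
  proof (rule ccontr)
    assume "\<not> ?thesis"
    then have "int p dvd a*d - b*c" by simp
    then show False using assms X GL2_iff by simp
  qed
  have s: "sclass p X = (\<lambda>l. msmul p l X) ` {1..<int p}" unfolding sclass_def by auto
  have "inj_on (\<lambda>l. msmul p l X) {1..<int p}"
  proof (rule inj_onI)
    fix l l' assume l: "l \<in> {1..<int p}" "l' \<in> {1..<int p}" and eq: "msmul p l X = msmul p l' X"
    have "int p dvd (l - l') * e" if "e \<in> {a,b,c,d}" for e
    proof -
      have "(l * e) mod int p = (l' * e) mod int p" using eq that X by (auto simp: msmul_def)
      then show ?thesis by (simp add: mod_eq_dvd_iff algebra_simps)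
    qed
    then have "int p dvd (l - l')" using ex prime_mult by blast
    then show "l = l'" using R_eq l by auto
  qed
  then have "card (sclass p X) = card {1..<int p}" unfolding s by (rule card_image)
  then show ?thesis by simp
qed

lemma sclass_in_GL2: assumes "X \<in> GL2 p" "Y \<in> sclass p X" shows "Y \<in> GL2 p \<and> sclass p Y = sclass p X"
proof -
  obtain l where l: "\<not> int p dvd l" "Y = mred p (ismul l X)" using assms(2) unfolding sclass_alt by blast
  have dX: "\<not> int p dvd mdet X" using assms(1) unfolding GL2_iff by blast
  have "\<not> int p dvd mdet (ismul l X)" unfolding mdet_ismul power2_eq_square using l(1) dX
    by (simp only: prime_mult de_Morgan_disj) simp
  then have "Y \<in> GL2 p" unfolding l(2) by (rule GL2_mred)
  moreover have "sclass p Y = sclass p X" unfolding l(2) sclass_mred using sclass_ismul[OF l(1)] .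
  ultimately show ?thesis by simp
qed

lemma class_count: assumes "S \<subseteq> carrier (PGL2 p)"
  shows "(p - 1) * card S = card {X \<in> GL2 p. sclass p X \<in> S}"
proof -
  have eq: "{X \<in> GL2 p. sclass p X \<in> S} = \<Union>S"
  proof (intro equalityI subsetI)
    fix X assume "X \<in> {X \<in> GL2 p. sclass p X \<in> S}"
    then have X: "X \<in> GL2 p" "sclass p X \<in> S" by auto
    have "mred p X = X" using X(1) unfolding GL2_iff by blast
    then have "X \<in> sclass p X" using mred_in_sclass[of X] by simp
    then show "X \<in> \<Union>S" using X by blast
  next
    fix Y assume "Y \<in> \<Union>S"
    then obtain s where s: "s \<in> S" "Y \<in> s" by blast
    then have "s \<in> sclass p ` GL2 p" using assms carrier_PGL2 by blast
    then obtain X where "X \<in> GL2 p" "s = sclass p X" by blast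
    then have "Y \<in> GL2 p \<and> sclass p Y = s" using sclass_in_GL2 s(2) by blast
    then show "Y \<in> {X \<in> GL2 p. sclass p X \<in> S}" using s(1) by simp
  qed
  have fS: "finite S" using assms finite_carrier finite_subset by blast
  have "\<Union>S \<subseteq> GL2 p" using eq by blast
  then have fU: "finite (\<Union>S)" using finite_GL2 finite_subset by blast
  have cS: "\<forall>s\<in>S. card s = p - 1"
  proof
    fix s assume "s \<in> S"
    then have "s \<in> sclass p ` GL2 p" using assms carrier_PGL2 by blast
    then show "card s = p - 1" using card_sclass by blast
  qed
  have dS: "\<forall>s1\<in>S. \<forall>s2\<in>S. s1 \<noteq> s2 \<longrightarrow> s1 \<inter> s2 = {}"
  proof (intro ballI impI)
    fix s1 s2 assume h: "s1 \<in> S" "s2 \<in> S" "s1 \<noteq> s2"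
    have "s1 \<in> sclass p ` GL2 p" "s2 \<in> sclass p ` GL2 p" using h assms carrier_PGL2 by blast+
    then obtain X1 X2 where X1: "X1 \<in> GL2 p" "s1 = sclass p X1" and X2: "X2 \<in> GL2 p" "s2 = sclass p X2" by blast
    show "s1 \<inter> s2 = {}"
    proof (rule ccontr)
      assume "s1 \<inter> s2 \<noteq> {}"
      then obtain Y where Y: "Y \<in> s1" "Y \<in> s2" by blast
      have "sclass p Y = s1" using sclass_in_GL2[OF X1(1), of Y] X1(2) Y(1) by blast
      moreover have "sclass p Y = s2" using sclass_in_GL2[OF X2(1), of Y] X2(2) Y(2) by blast
      ultimately show False using h(3) by simp
    qed
  qed
  have "(p - 1) * card S = card (\<Union>S)"
    by (rule card_partition[OF fS fU]) (use cS dS in blast)+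
  then show ?thesis using eq by simp
qed

end


context prm begin

lemma modeq: "int p dvd (x - y) \<Longrightarrow> y \<in> {0..<int p} \<Longrightarrow> x mod int p = y"
  using R_mod[of y] mod_eq_dvd_iff[of x "int p" y] by simp

definition Lset :: "int \<Rightarrow> int \<Rightarrow> (int \<times> int) set" where
  "Lset a b = {(c,d). c \<in> {0..<int p} \<and> d \<in> {0..<int p} \<and> int p dvd (a*d - b*c)}"

lemma card_Lset: assumes "a \<in> {0..<int p}" "b \<in> {0..<int p}" "(a,b) \<noteq> (0,0)"
  shows "card (Lset a b) = p"
proof -
  define f where "f \<tau> = ((\<tau>*a) mod int p, (\<tau>*b) mod int p)" for \<tau>
  have nab: "\<not> int p dvd a \<or> \<not> int p dvd b" using assms R_dvd by auto
  have inj: "inj_on f {0..<int p}"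
  proof (rule inj_onI)
    fix \<tau> \<tau>' assume h: "\<tau> \<in> {0..<int p}" "\<tau>' \<in> {0..<int p}" "f \<tau> = f \<tau>'"
    then have "(\<tau>*a) mod int p = (\<tau>'*a) mod int p" "(\<tau>*b) mod int p = (\<tau>'*b) mod int p" unfolding f_def by auto
    then have "int p dvd \<tau>*a - \<tau>'*a" "int p dvd \<tau>*b - \<tau>'*b" by (simp_all only: mod_eq_dvd_iff)
    then have "int p dvd (\<tau> - \<tau>')*a" "int p dvd (\<tau> - \<tau>')*b" by (simp_all add: algebra_simps)
    then have "int p dvd \<tau> - \<tau>'" using nab prime_mult by blast
    then show "\<tau> = \<tau>'" using R_eq h by blast
  qed
  have img: "f ` {0..<int p} = Lset a b"
  proof (intro equalityI subsetI)
    fix z assume "z \<in> f ` {0..<int p}"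
    then obtain \<tau> where \<tau>: "z = f \<tau>" by blast
    have d1: "int p dvd ((\<tau>*b) mod int p - \<tau>*b)" "int p dvd ((\<tau>*a) mod int p - \<tau>*a)" using mod_dvd_diff by blast+
    have "a * ((\<tau>*b) mod int p) - b * ((\<tau>*a) mod int p)
        = a * ((\<tau>*b) mod int p - \<tau>*b) - b * ((\<tau>*a) mod int p - \<tau>*a)" by (simp add: algebra_simps)
    moreover have "int p dvd a * ((\<tau>*b) mod int p - \<tau>*b) - b * ((\<tau>*a) mod int p - \<tau>*a)"
      using dvd_diff[OF dvd_mult[OF d1(1), of a] dvd_mult[OF d1(2), of b]] .
    ultimately show "z \<in> Lset a b" unfolding \<tau> f_def Lset_def using mod_R by simp
  next
    fix z assume "z \<in> Lset a b"
    then obtain c d where z: "z = (c,d)" "c \<in> {0..<int p}" "d \<in> {0..<int p}" "int p dvd (a*d - b*c)"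
      unfolding Lset_def by blast
    show "z \<in> f ` {0..<int p}"
    proof (cases "int p dvd a")
      case False
      define \<tau> where "\<tau> = (c * ip a) mod int p"
      have t1: "int p dvd (\<tau> - c * ip a)" unfolding \<tau>_def by (rule mod_dvd_diff)
      have t2: "int p dvd (a * ip a - 1)" using ip_inv[OF False] .
      have "\<tau> * a - c = (\<tau> - c * ip a) * a + c * (a * ip a - 1)" by (simp add: algebra_simps)
      moreover have "int p dvd (\<tau> - c * ip a) * a + c * (a * ip a - 1)"
        using dvd_add[OF dvd_mult2[OF t1] dvd_mult[OF t2]] .
      ultimately have e1: "int p dvd \<tau> * a - c" by simp
      have "a * (\<tau> * b - d) = b * (\<tau> * a - c) - (a*d - b*c)" by (simp add: algebra_simps)
      moreover have "int p dvd b * (\<tau> * a - c) - (a*d - b*c)" using dvd_diff[OF dvd_mult[OF e1] z(4)] .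
      ultimately have "int p dvd a * (\<tau> * b - d)" by simp
      then have e2: "int p dvd \<tau> * b - d" using False prime_mult by blast
      have "f \<tau> = (c,d)" unfolding f_def using modeq[OF e1 z(2)] modeq[OF e2 z(3)] by simp
      moreover have "\<tau> \<in> {0..<int p}" unfolding \<tau>_def by (rule mod_R)
      ultimately show ?thesis using z(1) by (intro image_eqI[where x = \<tau>]) simp_all
    next
      case True
      then have a0: "a = 0" using R_dvd assms(1) by blast
      then have nb: "\<not> int p dvd b" using nab True by blast
      have "int p dvd b * c" using z(4) a0 by simp
      then have "c = 0" using nb prime_mult R_dvd z(2) by blast
      define \<tau> where "\<tau> = (d * ip b) mod int p"
      have t1: "int p dvd (\<tau> - d * ip b)" unfolding \<tau>_def by (rule mod_dvd_diff)
      have t2: "int p dvd (b * ip b - 1)" using ip_inv[OF nb] .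
      have "\<tau> * b - d = (\<tau> - d * ip b) * b + d * (b * ip b - 1)" by (simp add: algebra_simps)
      moreover have "int p dvd (\<tau> - d * ip b) * b + d * (b * ip b - 1)"
        using dvd_add[OF dvd_mult2[OF t1] dvd_mult[OF t2]] .
      ultimately have e2: "int p dvd \<tau> * b - d" by simp
      have "f \<tau> = (c,d)" unfolding f_def using modeq[OF e2 z(3)] a0 \<open>c = 0\<close> by simp
      moreover have "\<tau> \<in> {0..<int p}" unfolding \<tau>_def by (rule mod_R)
      ultimately show ?thesis using z(1) by (intro image_eqI[where x = \<tau>]) simp_all
    qed
  qed
  have "card (Lset a b) = card {0..<int p}" unfolding img[symmetric] using inj by (rule card_image)
  then show ?thesis by simp
qed

definition Kset :: "int \<Rightarrow> int \<Rightarrow> (int \<times> int) set" where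
  "Kset a b = {(c,d). c \<in> {0..<int p} \<and> d \<in> {0..<int p} \<and> \<not> int p dvd (a*d - b*c)}"

lemma card_Kset: assumes "a \<in> {0..<int p}" "b \<in> {0..<int p}"
  shows "card (Kset a b) = (if (a,b) = (0,0) then 0 else p*p - p)"
proof (cases "(a,b) = (0,0)")
  case True
  then have "Kset a b = {}" unfolding Kset_def by auto
  then show ?thesis using True by simp
next
  case False
  have "Kset a b = ({0..<int p} \<times> {0..<int p}) - Lset a b" unfolding Kset_def Lset_def by auto
  moreover have "Lset a b \<subseteq> {0..<int p} \<times> {0..<int p}" unfolding Lset_def by auto
  ultimately have "card (Kset a b) = card ({0..<int p} \<times> {0..<int p}) - card (Lset a b)"
    by (simp add: card_Diff_subset finite_subset)
  moreover have "(if (a,b) = (0,0) then 0 else p*p - p) = p*p - p" by (rule if_not_P[OF False])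
  ultimately show ?thesis using card_Lset[OF assms False] by (simp add: card_cartesian_product)
qed

lemma card_GL2: "card (GL2 p) = (p*p - 1) * (p*p - p)"
proof -
  let ?R = "{0..<int p}"
  define g where "g = (\<lambda>((a::int,b::int),(c::int,d::int)). (a,b,c,d))"
  have "GL2 p = g ` (SIGMA x:?R \<times> ?R. Kset (fst x) (snd x))"
  proof (intro equalityI subsetI)
    fix M assume "M \<in> GL2 p"
    then obtain a b c d where M: "M = (a,b,c,d)" "a \<in> ?R" "b \<in> ?R" "c \<in> ?R" "d \<in> ?R" "\<not> int p dvd (a*d - b*c)"
      unfolding GL2_def by (auto simp: dvd_eq_mod_eq_0)
    then have "((a,b),(c,d)) \<in> (SIGMA x:?R \<times> ?R. Kset (fst x) (snd x))" unfolding Kset_def by simp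
    moreover have "M = g ((a,b),(c,d))" unfolding g_def M by simp
    ultimately show "M \<in> g ` (SIGMA x:?R \<times> ?R. Kset (fst x) (snd x))" by blast
  next
    fix M assume "M \<in> g ` (SIGMA x:?R \<times> ?R. Kset (fst x) (snd x))"
    then obtain a b c d where "M = (a,b,c,d)" "a \<in> ?R" "b \<in> ?R" "(c,d) \<in> Kset a b"
      unfolding g_def by auto
    then show "M \<in> GL2 p" unfolding GL2_def Kset_def by (auto simp: dvd_eq_mod_eq_0)
  qed
  moreover have "inj_on g (SIGMA x:?R \<times> ?R. Kset (fst x) (snd x))"
    unfolding g_def by (rule inj_onI) auto
  ultimately have "card (GL2 p) = card (SIGMA x:?R \<times> ?R. Kset (fst x) (snd x))"
    by (simp add: card_image)
  also have "\<dots> = (\<Sum>x\<in>?R \<times> ?R. card (Kset (fst x) (snd x)))"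
    by (rule card_SigmaI) (auto simp: Kset_def intro: finite_subset[of _ "?R \<times> ?R"])
  also have "\<dots> = (\<Sum>x\<in>?R \<times> ?R. if x = (0,0) then 0 else p*p - p)"
  proof (rule sum.cong)
    fix x assume "x \<in> ?R \<times> ?R"
    then obtain a b where "x = (a,b)" "a \<in> ?R" "b \<in> ?R" by blast
    then show "card (Kset (fst x) (snd x)) = (if x = (0,0) then 0 else p*p - p)"
      using card_Kset by simp
  qed simp
  also have "\<dots> = (\<Sum>x\<in>(?R \<times> ?R) - {(0,0)}. p*p - p)"
    by (rule sum.mono_neutral_cong_right) auto
  also have "\<dots> = (p*p - 1) * (p*p - p)"
  proof -
    have "(0,0) \<in> ?R \<times> ?R" using p_gt2 by simp
    then have "card ((?R \<times> ?R) - {(0,0)}) = p*p - 1" by (simp add: card_cartesian_product)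
    then show ?thesis by simp
  qed
  finally show ?thesis .
qed

lemma card_carrier: "card (carrier (PGL2 p)) = p * (p*p - 1)"
proof -
  have "(p - 1) * card (carrier (PGL2 p)) = card {X \<in> GL2 p. sclass p X \<in> carrier (PGL2 p)}"
    by (rule class_count) simp
  also have "{X \<in> GL2 p. sclass p X \<in> carrier (PGL2 p)} = GL2 p" using carrier_PGL2 by auto
  also have "card (GL2 p) = (p - 1) * (p * (p*p - 1))"
    unfolding card_GL2 by (simp add: algebra_simps diff_mult_distrib2)
  finally show ?thesis using p_gt2 by simp
qed

end


context prm begin

lemma GL2_R: "(a,b,c,d) \<in> GL2 p \<Longrightarrow> a \<in> {0..<int p} \<and> b \<in> {0..<int p} \<and> c \<in> {0..<int p} \<and> d \<in> {0..<int p}"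
  unfolding GL2_def by simp

lemma card_diag_set: "card {X \<in> GL2 p. fst (snd X) = 0 \<and> fst (snd (snd X)) = 0} = (p - 1) * (p - 1)"
proof -
  define f where "f = (\<lambda>(a::int, e::int). (a, 0::int, 0::int, e))"
  have "{X \<in> GL2 p. fst (snd X) = 0 \<and> fst (snd (snd X)) = 0} = f ` ({1..<int p} \<times> {1..<int p})"
  proof (intro equalityI subsetI)
    fix X assume X: "X \<in> {X \<in> GL2 p. fst (snd X) = 0 \<and> fst (snd (snd X)) = 0}"
    then obtain a e where Xe: "X = (a,0,0,e)" by (cases X rule: prod_cases4) auto
    have "a \<in> {0..<int p}" "e \<in> {0..<int p}" using GL2_R X Xe by auto
    moreover have "\<not> int p dvd a * e" using X Xe GL2_iff by simp
    then have "\<not> int p dvd a" "\<not> int p dvd e" by auto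
    ultimately have "a \<in> {1..<int p}" "e \<in> {1..<int p}" using R_dvd by auto
    then show "X \<in> f ` ({1..<int p} \<times> {1..<int p})" unfolding f_def Xe by force
  next
    fix X assume "X \<in> f ` ({1..<int p} \<times> {1..<int p})"
    then obtain a e where X: "X = (a,0,0,e)" "a \<in> {1..<int p}" "e \<in> {1..<int p}" unfolding f_def by auto
    then have "\<not> int p dvd a" "\<not> int p dvd e" using unit_range by auto
    then have "\<not> int p dvd a * e" using prime_mult by simp
    then show "X \<in> {X \<in> GL2 p. fst (snd X) = 0 \<and> fst (snd (snd X)) = 0}"
      using X unfolding GL2_def by (auto simp: dvd_eq_mod_eq_0)
  qed
  moreover have "inj_on f ({1..<int p} \<times> {1..<int p})" unfolding f_def by (rule inj_onI) auto
  moreover have e: "nat (int p - 1) = p - 1" using p_gt2 by (subst nat_diff_distrib) auto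
  ultimately show ?thesis by (simp add: card_image card_cartesian_product)
qed

lemma stab_count:
  assumes m: "\<not> int p dvd \<mu>" "\<not> int p dvd (\<mu> - 1)" "\<not> int p dvd (\<mu> + 1)"
  shows "card {g \<in> carrier (PGL2 p). g \<otimes>\<^bsub>PGL2 p\<^esub> sclass p (\<mu>,0,0,1) \<otimes>\<^bsub>PGL2 p\<^esub> inv\<^bsub>PGL2 p\<^esub> g
            = sclass p (\<mu>,0,0,1)} = p - 1"
proof -
  interpret G: group "PGL2 p" by (rule grp)
  define Dc where "Dc = sclass p (\<mu>,0,0,1)"
  have Dc: "Dc \<in> carrier (PGL2 p)" unfolding Dc_def using m sclass_in_carrier by simp
  define S where "S = {g \<in> carrier (PGL2 p). g \<otimes>\<^bsub>PGL2 p\<^esub> Dc \<otimes>\<^bsub>PGL2 p\<^esub> inv\<^bsub>PGL2 p\<^esub> g = Dc}"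
  have key: "sclass p X \<in> S \<longleftrightarrow> fst (snd X) = 0 \<and> fst (snd (snd X)) = 0" if X: "X \<in> GL2 p" for X
  proof -
    obtain a b c e where Xe: "X = (a,b,c,e)" by (cases X rule: prod_cases4)
    have R: "b \<in> {0..<int p}" "c \<in> {0..<int p}" using GL2_R X Xe by auto
    have dX: "\<not> int p dvd a*e - b*c" using X Xe GL2_iff by simp
    have xc: "sclass p X \<in> carrier (PGL2 p)" using X carrier_PGL2 by simp
    have "sclass p X \<in> S \<longleftrightarrow> sclass p X \<otimes>\<^bsub>PGL2 p\<^esub> Dc = Dc \<otimes>\<^bsub>PGL2 p\<^esub> sclass p X"
    proof
      assume "sclass p X \<in> S"
      then have h: "sclass p X \<otimes>\<^bsub>PGL2 p\<^esub> Dc \<otimes>\<^bsub>PGL2 p\<^esub> inv\<^bsub>PGL2 p\<^esub> sclass p X = Dc" unfolding S_def by simp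
      have "sclass p X \<otimes>\<^bsub>PGL2 p\<^esub> Dc = sclass p X \<otimes>\<^bsub>PGL2 p\<^esub> Dc \<otimes>\<^bsub>PGL2 p\<^esub> inv\<^bsub>PGL2 p\<^esub> sclass p X \<otimes>\<^bsub>PGL2 p\<^esub> sclass p X"
        using G.cancel1[of "sclass p X \<otimes>\<^bsub>PGL2 p\<^esub> Dc" "sclass p X"] xc Dc by simp
      then show "sclass p X \<otimes>\<^bsub>PGL2 p\<^esub> Dc = Dc \<otimes>\<^bsub>PGL2 p\<^esub> sclass p X" using h by simp
    next
      assume h: "sclass p X \<otimes>\<^bsub>PGL2 p\<^esub> Dc = Dc \<otimes>\<^bsub>PGL2 p\<^esub> sclass p X"
      have "sclass p X \<otimes>\<^bsub>PGL2 p\<^esub> Dc \<otimes>\<^bsub>PGL2 p\<^esub> inv\<^bsub>PGL2 p\<^esub> sclass p X = Dc"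
        unfolding h using G.cancel2[OF Dc xc] .
      then show "sclass p X \<in> S" unfolding S_def using xc by simp
    qed
    also have "\<dots> \<longleftrightarrow> sclass p (a*\<mu>, b, c*\<mu>, e) = sclass p (\<mu>*a, \<mu>*b, c, e)"
      unfolding Dc_def Xe by (simp add: PGL2_mult)
    also have "\<dots> \<longleftrightarrow> b = 0 \<and> c = 0"
    proof
      assume "sclass p (a*\<mu>, b, c*\<mu>, e) = sclass p (\<mu>*a, \<mu>*b, c, e)"
      then obtain l where l: "\<not> int p dvd l" "mred p (\<mu>*a, \<mu>*b, c, e) = mred p (ismul l (a*\<mu>, b, c*\<mu>, e))"
        using sclass_eq_iff by blast
      then have "(\<mu>*a) mod int p = (l*(a*\<mu>)) mod int p" "(\<mu>*b) mod int p = (l*b) mod int p"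
         "c mod int p = (l*(c*\<mu>)) mod int p" "e mod int p = (l*e) mod int p" by simp_all
      then have d: "int p dvd \<mu>*a - l*(a*\<mu>)" "int p dvd \<mu>*b - l*b" "int p dvd c - l*(c*\<mu>)" "int p dvd e - l*e"
        by (simp_all only: mod_eq_dvd_iff)
      show "b = 0 \<and> c = 0"
      proof (cases "int p dvd l - 1")
        case True
        have "(\<mu> - 1)*b = (\<mu>*b - l*b) + (l - 1)*b" by (simp add: algebra_simps)
        then have "int p dvd (\<mu> - 1)*b" using dvd_add[OF d(2) dvd_mult2[OF True]] by simp
        then have "int p dvd b" using m prime_mult by blast
        moreover have "(1 - \<mu>)*c = (c - l*(c*\<mu>)) + (l - 1)*(c*\<mu>)" by (simp add: algebra_simps)
        then have "int p dvd (1 - \<mu>)*c" using dvd_add[OF d(3) dvd_mult2[OF True]] by simp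
        then have "int p dvd (-(\<mu> - 1))*c" by simp
        then have "int p dvd c" using m prime_mult by (simp only: mult_minus_left dvd_minus_iff) blast
        ultimately show ?thesis using R R_dvd by blast
      next
        case False
        have "\<mu>*a - l*(a*\<mu>) = -((l - 1) * (\<mu> * a))" by (simp add: algebra_simps)
        then have "int p dvd (l - 1) * (\<mu> * a)" using d(1) by (simp only: dvd_minus_iff)
        then have pa: "int p dvd a" using False m prime_mult by blast
        have "e - l*e = -((l - 1) * e)" by (simp add: algebra_simps)
        then have "int p dvd (l - 1) * e" using d(4) by (simp only: dvd_minus_iff)
        then have pe: "int p dvd e" using False prime_mult by blast
        have "\<not> int p dvd b*c"
        proof
          assume "int p dvd b*c"
          moreover have "int p dvd a*e" using pa by simp
          ultimately have "int p dvd a*e - b*c" by (rule dvd_diff[rotated])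
          then show False using dX by simp
        qed
        then have nb: "\<not> int p dvd b" and nc: "\<not> int p dvd c" by auto
        have "\<mu>*b - l*b = (\<mu> - l)*b" by (simp add: algebra_simps)
        then have "int p dvd \<mu> - l" using d(2) nb prime_mult by simp
        moreover have "c - l*(c*\<mu>) = (1 - l*\<mu>)*c" by (simp add: algebra_simps)
        then have "int p dvd 1 - l*\<mu>" using d(3) nc prime_mult by simp
        moreover have "(1 - l*\<mu>) - \<mu>*(\<mu> - l) = - ((\<mu> - 1)*(\<mu> + 1))" by (simp add: algebra_simps)
        ultimately have "int p dvd - ((\<mu> - 1)*(\<mu> + 1))"
          using dvd_diff[of "int p" "1 - l*\<mu>" "\<mu>*(\<mu> - l)"] by (metis dvd_mult)
        then have "int p dvd (\<mu> - 1)*(\<mu> + 1)" by (simp only: dvd_minus_iff)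
        then show ?thesis using m prime_mult by blast
      qed
    next
      assume "b = 0 \<and> c = 0"
      then show "sclass p (a*\<mu>, b, c*\<mu>, e) = sclass p (\<mu>*a, \<mu>*b, c, e)" by (simp add: mult.commute)
    qed
    finally show ?thesis using Xe by simp
  qed
  have "(p - 1) * card S = card {X \<in> GL2 p. sclass p X \<in> S}" by (rule class_count) (auto simp: S_def)
  also have "{X \<in> GL2 p. sclass p X \<in> S} = {X \<in> GL2 p. fst (snd X) = 0 \<and> fst (snd (snd X)) = 0}"
    using key by blast
  also have "card \<dots> = (p - 1) * (p - 1)" by (rule card_diag_set)
  finally have "(p - 1) * card S = (p - 1) * (p - 1)" .
  then have "card S = p - 1" using p_gt2 by simp
  then show ?thesis unfolding S_def Dc_def .
qed

end


context prm begin

lemma nd_mult: "\<not> int p dvd a \<Longrightarrow> \<not> int p dvd b \<Longrightarrow> \<not> int p dvd a * b"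
  using prime_mult by blast

lemma F_count:
  assumes m: "\<not> int p dvd \<mu>" "\<not> int p dvd (\<mu> - 1)" "\<not> int p dvd (\<mu>^2 - \<mu> + 1)"
  shows "card {s \<in> carrier (PGL2 p). group.ord (PGL2 p) s = 2 \<and>
             group.ord (PGL2 p) (sclass p (\<mu>,0,0,1) \<otimes>\<^bsub>PGL2 p\<^esub> s) = 3} = p - 1"
proof -
  define S where "S = {s \<in> carrier (PGL2 p). group.ord (PGL2 p) s = 2 \<and>
             group.ord (PGL2 p) (sclass p (\<mu>,0,0,1) \<otimes>\<^bsub>PGL2 p\<^esub> s) = 3}"
  define r where "r = - (\<mu>^2 - \<mu> + 1) * ip \<mu>"
  have mi: "int p dvd (\<mu> * ip \<mu> - 1)" using ip_inv[OF m(1)] .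
  have nmi: "\<not> int p dvd \<mu> * ip \<mu>"
  proof
    assume "int p dvd \<mu> * ip \<mu>"
    then have "int p dvd \<mu> * ip \<mu> - (\<mu> * ip \<mu> - 1)" using mi by (rule dvd_diff)
    then show False using pdvd1 by simp
  qed
  have nr: "\<not> int p dvd r"
  proof
    assume "int p dvd r"
    then have "int p dvd \<mu> * r" by simp
    moreover have "\<mu> * r = - ((\<mu>^2 - \<mu> + 1) * (\<mu> * ip \<mu>))" unfolding r_def by (simp add: algebra_simps)
    ultimately have "int p dvd (\<mu>^2 - \<mu> + 1) * (\<mu> * ip \<mu>)" by (simp only: dvd_minus_iff)
    then show False using m(3) nmi prime_mult by blast
  qed
  have nr1: "\<not> int p dvd (1 + r)"
  proof
    assume "int p dvd (1 + r)"
    then have h: "int p dvd \<mu> * (1 + r)" by simp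
    have "(\<mu> - 1) * (\<mu> - 1) = - (\<mu> * (1 + r)) - (\<mu>^2 - \<mu> + 1) * (\<mu> * ip \<mu> - 1)"
      unfolding r_def by (simp add: algebra_simps power2_eq_square)
    moreover have "int p dvd - (\<mu> * (1 + r)) - (\<mu>^2 - \<mu> + 1) * (\<mu> * ip \<mu> - 1)"
      using dvd_diff[OF h[THEN dvd_minus_iff[THEN iffD2]] dvd_mult[OF mi]] .
    ultimately have "int p dvd (\<mu> - 1) * (\<mu> - 1)" by simp
    then show False using m(2) prime_mult by blast
  qed
  have key: "sclass p X \<in> S \<longleftrightarrow> int p dvd (fst X + snd (snd (snd X))) \<and>
      int p dvd (fst (snd X) * fst (snd (snd X)) - r * (fst X)^2)" if X: "X \<in> GL2 p" for X
  proof -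
    obtain x y z w where Xe: "X = (x,y,z,w)" by (cases X rule: prod_cases4)
    have dX: "\<not> int p dvd mdet X" using X GL2_iff by simp
    have xc: "sclass p X \<in> carrier (PGL2 p)" using X carrier_PGL2 by simp
    have dDX: "\<not> int p dvd mdet (imul (\<mu>,0,0,1) X)" unfolding mdet_imul using m(1) dX by (simp add: nd_mult)
    have "sclass p X \<in> S \<longleftrightarrow> int p dvd mtr X \<and> int p dvd (mtr (imul (\<mu>,0,0,1) X)^2 - mdet (imul (\<mu>,0,0,1) X))"
      unfolding S_def using xc ord2_iff[OF dX] ord3_iff[OF dDX] by (simp add: PGL2_mult)
    also have "\<dots> \<longleftrightarrow> int p dvd (x + w) \<and> int p dvd ((\<mu>*x + w)^2 - (\<mu>*x*w - \<mu>*y*z))"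
      unfolding Xe by (simp add: algebra_simps)
    also have "\<dots> \<longleftrightarrow> int p dvd (x + w) \<and> int p dvd (y*z - r*x^2)"
    proof (cases "int p dvd (x + w)")
      case True
      define s where "s = x + w"
      define Q where "Q = (\<mu>^2 - \<mu> + 1)*x^2 + \<mu>*y*z"
      have e1: "(\<mu>*x + w)^2 - (\<mu>*x*w - \<mu>*y*z) = Q + s*(2*(\<mu>-1)*x + s - \<mu>*x)"
        unfolding Q_def s_def by (simp add: algebra_simps power2_eq_square)
      have ps: "int p dvd s*(2*(\<mu>-1)*x + s - \<mu>*x)" using True s_def by simp
      have "int p dvd ((\<mu>*x + w)^2 - (\<mu>*x*w - \<mu>*y*z)) \<longleftrightarrow> int p dvd Q"
        unfolding e1 using ps by (simp add: dvd_add_left_iff)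
      also have "\<dots> \<longleftrightarrow> int p dvd (y*z - r*x^2)"
      proof
        assume hQ: "int p dvd Q"
        have "ip \<mu> * Q = (\<mu> * ip \<mu> - 1) * (y*z) + (y*z - r*x^2)"
          unfolding Q_def r_def by (simp add: algebra_simps power2_eq_square)
        moreover have "int p dvd ip \<mu> * Q" using hQ by (rule dvd_mult)
        ultimately have "int p dvd (\<mu> * ip \<mu> - 1) * (y*z) + (y*z - r*x^2)" by simp
        then show "int p dvd (y*z - r*x^2)" using dvd_mult2[OF mi] by (simp add: dvd_add_right_iff)
      next
        assume h: "int p dvd (y*z - r*x^2)"
        have "\<mu> * (y*z - r*x^2) = Q + (\<mu>^2 - \<mu> + 1) * x^2 * (\<mu> * ip \<mu> - 1)"
          unfolding Q_def r_def by (simp add: algebra_simps power2_eq_square)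
        moreover have "int p dvd \<mu> * (y*z - r*x^2)" using h by simp
        ultimately have "int p dvd Q + (\<mu>^2 - \<mu> + 1) * x^2 * (\<mu> * ip \<mu> - 1)" by simp
        then show "int p dvd Q" using dvd_mult[OF mi] by (simp add: dvd_add_left_iff)
      qed
      finally show ?thesis using True by simp
    qed simp
    finally show ?thesis using Xe by simp
  qed
  define \<phi> where "\<phi> = (\<lambda>(x::int, y::int). (x, y, (r*x^2*ip y) mod int p, (-x) mod int p))"
  have img: "{X \<in> GL2 p. sclass p X \<in> S} = \<phi> ` ({1..<int p} \<times> {1..<int p})"
  proof (intro equalityI subsetI)
    fix X assume "X \<in> {X \<in> GL2 p. sclass p X \<in> S}"
    then have X: "X \<in> GL2 p" "sclass p X \<in> S" by auto
    obtain x y z w where Xe: "X = (x,y,z,w)" by (cases X rule: prod_cases4)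
    have R: "x \<in> {0..<int p}" "y \<in> {0..<int p}" "z \<in> {0..<int p}" "w \<in> {0..<int p}" using GL2_R X Xe by auto
    have dX: "\<not> int p dvd x*w - y*z" using X Xe GL2_iff by simp
    have c1: "int p dvd x + w" and c2: "int p dvd y*z - r*x^2" using key[OF X(1)] X(2) Xe by auto
    have nx: "\<not> int p dvd x"
    proof
      assume "int p dvd x"
      then have "int p dvd r*x^2" by (simp add: power2_eq_square)
      then have "int p dvd y*z" using c2 by (simp add: dvd_diff_left_iff)
      moreover have "int p dvd x*w" using \<open>int p dvd x\<close> by simp
      ultimately have "int p dvd x*w - y*z" using dvd_diff by blast
      then show False using dX by simp
    qed
    have ny: "\<not> int p dvd y"
    proof
      assume "int p dvd y"
      then have "int p dvd y*z" by simp
      then have "int p dvd r*x^2" using c2 by (simp add: dvd_diff_right_iff)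
      then show False using nr nx prime_mult by (simp add: power2_eq_square)
    qed
    have "r*x^2*ip y - z = - (ip y * (y*z - r*x^2)) + z*(y * ip y - 1)" by (simp add: algebra_simps)
    moreover have "int p dvd - (ip y * (y*z - r*x^2)) + z*(y * ip y - 1)"
      using dvd_add[OF dvd_mult[OF c2, of "ip y", THEN dvd_minus_iff[THEN iffD2]] dvd_mult[OF ip_inv[OF ny], of z]] .
    ultimately have "int p dvd r*x^2*ip y - z" by simp
    then have z: "(r*x^2*ip y) mod int p = z" using modeq R(3) by blast
    have "(-x) - w = -(x + w)" by simp
    then have "int p dvd (-x) - w" using c1 by (simp only: dvd_minus_iff)
    then have w: "(-x) mod int p = w" using modeq R(4) by blast
    have "x \<in> {1..<int p}" "y \<in> {1..<int p}" using R(1,2) nx ny R_dvd by auto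
    then show "X \<in> \<phi> ` ({1..<int p} \<times> {1..<int p})" unfolding Xe \<phi>_def using z w by force
  next
    fix X assume "X \<in> \<phi> ` ({1..<int p} \<times> {1..<int p})"
    then obtain x y where xy: "x \<in> {1..<int p}" "y \<in> {1..<int p}" "X = \<phi> (x,y)" by blast
    define z where "z = (r*x^2*ip y) mod int p"
    define w where "w = (-x) mod int p"
    have Xe: "X = (x,y,z,w)" unfolding xy(3) \<phi>_def z_def w_def by simp
    have nx: "\<not> int p dvd x" and ny: "\<not> int p dvd y" using xy unit_range by auto
    have c1: "int p dvd x + w"
    proof -
      have "int p dvd w - (-x)" unfolding w_def by (rule mod_dvd_diff)
      then show ?thesis by (simp add: algebra_simps)
    qed
    have zd: "int p dvd z - r*x^2*ip y" unfolding z_def by (rule mod_dvd_diff)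
    have "y*z - r*x^2 = y*(z - r*x^2*ip y) + r*x^2*(y * ip y - 1)" by (simp add: algebra_simps)
    moreover have "int p dvd y*(z - r*x^2*ip y) + r*x^2*(y * ip y - 1)"
      using dvd_add[OF dvd_mult[OF zd] dvd_mult[OF ip_inv[OF ny]]] .
    ultimately have c2: "int p dvd y*z - r*x^2" by simp
    have nd: "\<not> int p dvd x*w - y*z"
    proof
      assume h: "int p dvd x*w - y*z"
      have "x^2 * (1 + r) = x*(x + w) - (y*z - r*x^2) - (x*w - y*z)" by (simp add: algebra_simps power2_eq_square)
      moreover have "int p dvd x*(x + w) - (y*z - r*x^2) - (x*w - y*z)"
        using dvd_diff[OF dvd_diff[OF dvd_mult[OF c1] c2] h] .
      ultimately have "int p dvd x^2 * (1 + r)" by simp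
      then show False using nx nr1 prime_mult by (simp add: power2_eq_square)
    qed
    have inG: "X \<in> GL2 p"
    proof -
      have "x mod int p = x" "y mod int p = y" using xy R_mod by auto
      moreover have "z mod int p = z" "w mod int p = w" unfolding z_def w_def by simp_all
      ultimately show ?thesis unfolding GL2_iff Xe using nd by simp
    qed
    have "sclass p X \<in> S" using key[OF inG] Xe c1 c2 by simp
    then show "X \<in> {X \<in> GL2 p. sclass p X \<in> S}" using inG by simp
  qed
  have inj: "inj_on \<phi> ({1..<int p} \<times> {1..<int p})" unfolding \<phi>_def by (rule inj_onI) auto
  have e: "nat (int p - 1) = p - 1" using p_gt2 by (subst nat_diff_distrib) auto
  have "(p - 1) * card S = card {X \<in> GL2 p. sclass p X \<in> S}" by (rule class_count) (auto simp: S_def)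
  also have "\<dots> = (p - 1) * (p - 1)" unfolding img using inj e by (simp add: card_image card_cartesian_product)
  finally have "card S = p - 1" using p_gt2 by simp
  then show ?thesis unfolding S_def .
qed

end


context group begin

lemma F_card_le: assumes "g \<in> carrier G" "y \<in> carrier G" "finite (carrier G)"
  shows "card {a \<in> carrier G. ord a = 2 \<and> ord (y \<otimes> a) = 3}
      \<le> card {a \<in> carrier G. ord a = 2 \<and> ord ((g \<otimes> y \<otimes> inv g) \<otimes> a) = 3}"
proof (rule card_inj_on_le)
  show "inj_on (\<lambda>a. g \<otimes> a \<otimes> inv g) {a \<in> carrier G. ord a = 2 \<and> ord (y \<otimes> a) = 3}"
  proof (rule inj_onI)
    fix a a' assume h: "a \<in> {a \<in> carrier G. ord a = 2 \<and> ord (y \<otimes> a) = 3}"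
      "a' \<in> {a \<in> carrier G. ord a = 2 \<and> ord (y \<otimes> a) = 3}" "g \<otimes> a \<otimes> inv g = g \<otimes> a' \<otimes> inv g"
    then have "inv g \<otimes> (g \<otimes> a \<otimes> inv g) \<otimes> g = inv g \<otimes> (g \<otimes> a' \<otimes> inv g) \<otimes> g" by simp
    then show "a = a'" using h assms by (simp add: m_assoc[symmetric] cancel1)
  qed
  show "(\<lambda>a. g \<otimes> a \<otimes> inv g) ` {a \<in> carrier G. ord a = 2 \<and> ord (y \<otimes> a) = 3}
      \<subseteq> {a \<in> carrier G. ord a = 2 \<and> ord ((g \<otimes> y \<otimes> inv g) \<otimes> a) = 3}"
  proof
    fix b assume "b \<in> (\<lambda>a. g \<otimes> a \<otimes> inv g) ` {a \<in> carrier G. ord a = 2 \<and> ord (y \<otimes> a) = 3}"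
    then obtain a where a: "a \<in> carrier G" "ord a = 2" "ord (y \<otimes> a) = 3" "b = g \<otimes> a \<otimes> inv g" by blast
    have "(g \<otimes> y \<otimes> inv g) \<otimes> b = g \<otimes> (y \<otimes> a) \<otimes> inv g"
      using a assms by (simp add: m_assoc[symmetric] cancel1)
    then have "ord ((g \<otimes> y \<otimes> inv g) \<otimes> b) = 3" using ord_conj[of g "y \<otimes> a"] a assms by simp
    moreover have "ord b = 2" using ord_conj[of g a] a assms by simp
    ultimately show "b \<in> {a \<in> carrier G. ord a = 2 \<and> ord ((g \<otimes> y \<otimes> inv g) \<otimes> a) = 3}"
      using a assms by simp
  qed
  show "finite {a \<in> carrier G. ord a = 2 \<and> ord ((g \<otimes> y \<otimes> inv g) \<otimes> a) = 3}" using assms by simp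
qed

lemma F_card_conj: assumes "g \<in> carrier G" "y \<in> carrier G" "finite (carrier G)"
  shows "card {a \<in> carrier G. ord a = 2 \<and> ord ((g \<otimes> y \<otimes> inv g) \<otimes> a) = 3}
      = card {a \<in> carrier G. ord a = 2 \<and> ord (y \<otimes> a) = 3}"
proof -
  have "inv g \<otimes> (g \<otimes> y \<otimes> inv g) \<otimes> inv (inv g) = y" using assms by (simp add: m_assoc[symmetric] cancel1)
  then have "card {a \<in> carrier G. ord a = 2 \<and> ord ((g \<otimes> y \<otimes> inv g) \<otimes> a) = 3}
      \<le> card {a \<in> carrier G. ord a = 2 \<and> ord (y \<otimes> a) = 3}"
    using F_card_le[of "inv g" "g \<otimes> y \<otimes> inv g"] assms by simp
  moreover note F_card_le[OF assms]
  ultimately show ?thesis by simp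
qed

lemma conj_class_conj: assumes "g \<in> carrier G" "y \<in> carrier G"
  shows "conj_class G (g \<otimes> y \<otimes> inv g) = conj_class G y"
proof (intro equalityI subsetI)
  fix z assume "z \<in> conj_class G (g \<otimes> y \<otimes> inv g)"
  then obtain h where h: "h \<in> carrier G" "z = h \<otimes> (g \<otimes> y \<otimes> inv g) \<otimes> inv h" unfolding conj_class_def by blast
  have "z = (h \<otimes> g) \<otimes> y \<otimes> inv (h \<otimes> g)" using h assms by (simp add: m_assoc[symmetric] inv_mult_group)
  then show "z \<in> conj_class G y" unfolding conj_class_def using h assms by blast
next
  fix z assume "z \<in> conj_class G y"
  then obtain h where h: "h \<in> carrier G" "z = h \<otimes> y \<otimes> inv h" unfolding conj_class_def by blast
  have "z = (h \<otimes> inv g) \<otimes> (g \<otimes> y \<otimes> inv g) \<otimes> inv (h \<otimes> inv g)"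
    using h assms by (simp add: m_assoc[symmetric] inv_mult_group cancel1)
  then show "z \<in> conj_class G (g \<otimes> y \<otimes> inv g)" unfolding conj_class_def using h assms by blast
qed

lemma triple_count:
  assumes fin: "finite (carrier G)" and x: "x \<in> carrier G" "ord x = k"
  shows "card {t \<in> triples G k. snd (snd t) \<in> conj_class G x} =
         card (conj_class G x) * card {a \<in> carrier G. ord a = 2 \<and> ord (x \<otimes> a) = 3}"
proof -
  define C where "C = conj_class G x"
  define F where "F c = {a \<in> carrier G. ord a = 2 \<and> ord (c \<otimes> a) = 3}" for c
  have Cc: "C \<subseteq> carrier G" unfolding C_def conj_class_def using x by auto
  have Ck: "ord c = k" if "c \<in> C" for c
    using that x ord_conj unfolding C_def conj_class_def by auto
  define h where "h = (\<lambda>(c,a). (a, inv a \<otimes> inv c, c))"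
  have T: "{t \<in> triples G k. snd (snd t) \<in> C} = h ` (SIGMA c:C. F c)"
  proof (intro equalityI subsetI)
    fix t assume "t \<in> {t \<in> triples G k. snd (snd t) \<in> C}"
    then obtain a b c where t: "t = (a,b,c)" "a \<in> carrier G" "b \<in> carrier G" "c \<in> carrier G"
      "a \<otimes> b \<otimes> c = \<one>" "ord a = 2" "ord b = 3" "c \<in> C"
      unfolding triples_def by auto
    have "b = inv a \<otimes> (a \<otimes> b \<otimes> c) \<otimes> inv c" using t(2-4) by (simp add: m_assoc[symmetric] cancel2)
    then have b: "b = inv a \<otimes> inv c" using t by simp
    have "inv (c \<otimes> a) = b" using b t by (simp add: inv_mult_group)
    then have "ord (c \<otimes> a) = 3" using ord_inv[of "c \<otimes> a"] t by simp
    then have "(c, a) \<in> (SIGMA c:C. F c)" unfolding F_def using t by simp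
    moreover have "t = h (c,a)" unfolding h_def using t b by simp
    ultimately show "t \<in> h ` (SIGMA c:C. F c)" by blast
  next
    fix t assume "t \<in> h ` (SIGMA c:C. F c)"
    then obtain c a where ca: "c \<in> C" "a \<in> F c" "t = (a, inv a \<otimes> inv c, c)" unfolding h_def by auto
    have a: "a \<in> carrier G" "ord a = 2" "ord (c \<otimes> a) = 3" using ca(2) unfolding F_def by auto
    have c: "c \<in> carrier G" using ca Cc by auto
    have "inv a \<otimes> inv c = inv (c \<otimes> a)" using a c by (simp add: inv_mult_group)
    then have "ord (inv a \<otimes> inv c) = 3" using ord_inv[of "c \<otimes> a"] a c by simp
    moreover have "a \<otimes> (inv a \<otimes> inv c) \<otimes> c = \<one>" using a c by (simp add: m_assoc[symmetric])
    ultimately show "t \<in> {t \<in> triples G k. snd (snd t) \<in> C}"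
      unfolding triples_def using ca a c Ck by simp
  qed
  have inj: "inj_on h (SIGMA c:C. F c)" unfolding h_def by (rule inj_onI) auto
  have fC: "finite C" using Cc fin finite_subset by blast
  have "card {t \<in> triples G k. snd (snd t) \<in> C} = card (SIGMA c:C. F c)"
    unfolding T using inj by (rule card_image)
  also have "\<dots> = (\<Sum>c\<in>C. card (F c))"
    by (rule card_SigmaI[OF fC]) (auto simp: F_def fin)
  also have "\<dots> = (\<Sum>c\<in>C. card (F x))"
  proof (rule sum.cong)
    fix c assume "c \<in> C"
    then obtain g where "g \<in> carrier G" "c = g \<otimes> x \<otimes> inv g" unfolding C_def conj_class_def by blast
    then show "card (F c) = card (F x)" unfolding F_def using F_card_conj x fin by simp
  qed simp
  also have "\<dots> = card C * card (F x)" by simp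
  finally show ?thesis unfolding C_def F_def .
qed

lemma conj_orbit_stab: assumes "x \<in> carrier G"
  shows "card (conj_class G x) * card {g \<in> carrier G. g \<otimes> x \<otimes> inv g = x} = card (carrier G)"
proof -
  have "card (orbit G (\<lambda>g. \<lambda>h\<in>carrier G. g \<otimes> h \<otimes> inv g) x) *
        card (stabilizer G (\<lambda>g. \<lambda>h\<in>carrier G. g \<otimes> h \<otimes> inv g) x) = order G"
    using group_action.orbit_stabilizer_theorem[OF action_by_conjugation assms] .
  moreover have "orbit G (\<lambda>g. \<lambda>h\<in>carrier G. g \<otimes> h \<otimes> inv g) x = conj_class G x"
    unfolding orbit_def conj_class_def using assms by auto
  moreover have "stabilizer G (\<lambda>g. \<lambda>h\<in>carrier G. g \<otimes> h \<otimes> inv g) x = {g \<in> carrier G. g \<otimes> x \<otimes> inv g = x}"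
    unfolding stabilizer_def using assms by auto
  ultimately show ?thesis by (simp add: order_def)
qed

end



theorem lemma2:
  fixes p k :: nat and C :: "mat2 set set"
  assumes "prime p" and "p mod 24 = 19"
    and "k dvd p - 1" and "k > 10" and "odd ((p - 1) div k)"
    and "\<exists>c \<in> carrier (PGL2 p). group.ord (PGL2 p) c = k \<and> C = conj_class (PGL2 p) c"
  shows "card {t \<in> triples (PGL2 p) k. snd (snd t) \<in> C} = p * (p^2 - 1)"
proof -
  have "19 \<le> p" using assms(2) mod_less_eq_dividend[of p 24] by simp
  then have p3: "p > 3" by simp
  interpret prm p using assms(1) p3 by unfold_locales
  interpret G: group "PGL2 p" by (rule grp)
  obtain c where c: "c \<in> carrier (PGL2 p)" "group.ord (PGL2 p) c = k" "C = conj_class (PGL2 p) c"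
    using assms(6) by blast
  obtain g \<mu> where gm: "g \<in> carrier (PGL2 p)" "\<not> int p dvd \<mu>" "\<not> int p dvd (\<mu> - 1)"
    "c = g \<otimes>\<^bsub>PGL2 p\<^esub> sclass p (\<mu>,0,0,1) \<otimes>\<^bsub>PGL2 p\<^esub> inv\<^bsub>PGL2 p\<^esub> g"
    using conj_reduce[OF c(1,2) assms(3)] assms(4) by auto
  define Dc where "Dc = sclass p (\<mu>,0,0,1)"
  have Dcc: "Dc \<in> carrier (PGL2 p)" unfolding Dc_def using gm(2) sclass_in_carrier by simp
  have ordD: "group.ord (PGL2 p) Dc = k" using G.ord_conj[OF gm(1) Dcc] gm(4) c(2) Dc_def by simp
  have m3: "\<not> int p dvd (\<mu> + 1)" "\<not> int p dvd (\<mu>^2 - \<mu> + 1)"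
    using diag_facts[OF gm(2,3)] ordD assms(4) unfolding Dc_def by auto
  have CD: "C = conj_class (PGL2 p) Dc" using c(3) gm(4) G.conj_class_conj[OF gm(1) Dcc] Dc_def by simp
  have "card {t \<in> triples (PGL2 p) k. snd (snd t) \<in> C} =
        card (conj_class (PGL2 p) Dc) * card {a \<in> carrier (PGL2 p). group.ord (PGL2 p) a = 2 \<and>
           group.ord (PGL2 p) (Dc \<otimes>\<^bsub>PGL2 p\<^esub> a) = 3}"
    unfolding CD by (rule G.triple_count[OF finite_carrier Dcc ordD])
  also have "card {a \<in> carrier (PGL2 p). group.ord (PGL2 p) a = 2 \<and>
           group.ord (PGL2 p) (Dc \<otimes>\<^bsub>PGL2 p\<^esub> a) = 3} = p - 1"
    unfolding Dc_def using F_count[OF gm(2,3) m3(2)] .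
  also have "card (conj_class (PGL2 p) Dc) = p * (p + 1)"
  proof -
    have "card (conj_class (PGL2 p) Dc) * (p - 1) = card (carrier (PGL2 p))"
      using G.conj_orbit_stab[OF Dcc] stab_count[OF gm(2,3) m3(1)] unfolding Dc_def by simp
    also have "\<dots> = p * (p*p - 1)" by (rule card_carrier)
    also have "\<dots> = p * (p + 1) * (p - 1)" by (cases p) (simp_all add: algebra_simps)
    finally show ?thesis using p3 by simp
  qed
  also have "p * (p + 1) * (p - 1) = p * (p^2 - 1)" by (cases p) (simp_all add: algebra_simps power2_eq_square)
  finally show ?thesis .
qed


end
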